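(* Assume all hypotheses of the following setting: $n,m\in\mathbb{N}$; $X_1,\ldots,X_n,Y_1,\ldots,Y_m$ are GTAI; $\Theta_1,\ldots,\Theta_n,\Delta_1,\ldots,\Delta_m$ are non-negative, non-degenerate at zero, arbitrarily dependent random variables with distributions whose supports are bounded from above, independent of $(X_1,\ldots,X_n,Y_1,\ldots,Y_m)$; for each $i\le n\wedge m$ the pair $(X_i,Y_i)$ is SAI with constant $C_i>0$; $X_i,Y_j$ are independent for $i\neq j$. Assume moreover that $X_i$ has distribution $F_i\in\mathcal{R}_{-\alpha_i}$ and $Y_j$ has distribution $G_j\in\mathcal{R}_{-\alpha'_j}$ with $\alpha_i,\alpha'_j\in[0,\infty)$, for all $i\le n$, $j\le m$. Then, with $X_n(\Theta)=\sum_{i=1}^n\Theta_iX_i$ and $Y_m(\Delta)=\sum_{j=1}^m\Delta_jY_j$, $$\mathbb{P}(X_n(\Theta)>x,\;Y_m(\Delta)>y)\sim\sum_{i=1}^n\sum_{\substack{j=1\\ j\neq i}}^m\mathbb{E}\big[\Theta_i^{\alpha_i}\Delta_j^{\alpha'_j}\big]\overline F_i(x)\overline G_j(y)+\sum_{i=1}^{n\wedge m}C_i\,\mathbb{E}\big[\Theta_i^{\alpha_i}\Delta_i^{\alpha'_i}\big]\overline F_i(x)\overline G_i(y),$$ as $x\wedge y\to\infty$.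
   Context: $\overline V=1-V$ denotes the tail of a distribution $V$. $V\in\mathcal{R}_{-\alpha}$ (regular variation with index $\alpha\ge0$) if $\lim_{x\to\infty}\overline V(tx)/\overline V(x)=t^{-\alpha}$ for all $t>0$. SAI: real random variables $X,Y$ with distributions $F,G$ are SAI with constant $C>0$ if, as $x\wedge y\to\infty$, $\mathbb{P}(X^->x,Y>y)=O(F(-x)\overline G(y))$, $\mathbb{P}(X>x,Y^->y)=O(\overline F(x)G(-y))$ and $\mathbb{P}(X>x,Y>y)\sim C\,\overline F(x)\overline G(y)$, where $z^-=\max\{-z,0\}$. GTAI: real random variables $X_1,\ldots,X_n,Y_1,\ldots,Y_m$ with supports unbounded above are GTAI if $\lim_{x_i\wedge x_k\wedge y_j\to\infty}\mathbb{P}(|X_i|>x_i\mid X_k>x_k,Y_j>y_j)=0$ for all $1\le i\neq k\le n$, $1\le j\le m$, and $\lim_{x_i\wedge y_j\wedge y_k\to\infty}\mathbb{P}(|Y_j|>y_j\mid X_i>x_i,Y_k>y_k)=0$ for all $1\le j\neq k\le m$, $1\le i\le n$. $f\sim g$ as $x\wedge y\to\infty$ means $f(x,y)/g(x,y)\to1$ as $\min\{x,y\}\to\infty$. *)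

theory Defs
  imports "HOL-Probability.Probability" "HOL-Library.Landau_Symbols"
begin

definition tail :: "'a measure \<Rightarrow> ('a \<Rightarrow> real) \<Rightarrow> real \<Rightarrow> real" where
  "tail M X x = measure M {\<omega> \<in> space M. X \<omega> > x}"

definition cdf_of :: "'a measure \<Rightarrow> ('a \<Rightarrow> real) \<Rightarrow> real \<Rightarrow> real" where
  "cdf_of M X x = measure M {\<omega> \<in> space M. X \<omega> \<le> x}"

definition regvar_tail :: "(real \<Rightarrow> real) \<Rightarrow> real \<Rightarrow> bool" where
  "regvar_tail V \<alpha> \<longleftrightarrow> (\<forall>t>0. ((\<lambda>x. V (t * x) / V x) \<longlongrightarrow> t powr (- \<alpha>)) at_top)"

definition neg_part :: "real \<Rightarrow> real" where
  "neg_part z = max (- z) 0"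

definition unbounded_above :: "'a measure \<Rightarrow> ('a \<Rightarrow> real) \<Rightarrow> bool" where
  "unbounded_above M X \<longleftrightarrow> (\<forall>x. measure M {\<omega> \<in> space M. X \<omega> > x} > 0)"

definition SAI :: "'a measure \<Rightarrow> ('a \<Rightarrow> real) \<Rightarrow> ('a \<Rightarrow> real) \<Rightarrow> real \<Rightarrow> bool" where
  "SAI M X Y C \<longleftrightarrow> C > 0 \<and>
     (\<lambda>(x, y). measure M {\<omega> \<in> space M. neg_part (X \<omega>) > x \<and> Y \<omega> > y})
        \<in> O[at_top \<times>\<^sub>F at_top](\<lambda>(x, y). cdf_of M X (- x) * tail M Y y) \<and>
     (\<lambda>(x, y). measure M {\<omega> \<in> space M. X \<omega> > x \<and> neg_part (Y \<omega>) > y})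
        \<in> O[at_top \<times>\<^sub>F at_top](\<lambda>(x, y). tail M X x * cdf_of M Y (- y)) \<and>
     (\<lambda>(x, y). measure M {\<omega> \<in> space M. X \<omega> > x \<and> Y \<omega> > y})
        \<sim>[at_top \<times>\<^sub>F at_top] (\<lambda>(x, y). C * tail M X x * tail M Y y)"

text \<open>GTAI for X_1..X_n, Y_1..Y_m (supports unbounded above); conditional probabilities
  P(A | B) written as P(A \<inter> B) / P(B).\<close>
definition GTAI :: "'a measure \<Rightarrow> nat \<Rightarrow> nat \<Rightarrow> (nat \<Rightarrow> 'a \<Rightarrow> real) \<Rightarrow> (nat \<Rightarrow> 'a \<Rightarrow> real) \<Rightarrow> bool" where
  "GTAI M n m X Y \<longleftrightarrow>
     (\<forall>i\<in>{1..n}. unbounded_above M (X i)) \<and> (\<forall>j\<in>{1..m}. unbounded_above M (Y j)) \<and>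
     (\<forall>i\<in>{1..n}. \<forall>k\<in>{1..n}. \<forall>j\<in>{1..m}. i \<noteq> k \<longrightarrow>
        ((\<lambda>(a, b, c). measure M {\<omega> \<in> space M. \<bar>X i \<omega>\<bar> > a \<and> X k \<omega> > b \<and> Y j \<omega> > c}
                    / measure M {\<omega> \<in> space M. X k \<omega> > b \<and> Y j \<omega> > c})
          \<longlongrightarrow> 0) (at_top \<times>\<^sub>F at_top \<times>\<^sub>F at_top)) \<and>
     (\<forall>j\<in>{1..m}. \<forall>k\<in>{1..m}. \<forall>i\<in>{1..n}. j \<noteq> k \<longrightarrow>
        ((\<lambda>(a, b, c). measure M {\<omega> \<in> space M. \<bar>Y j \<omega>\<bar> > a \<and> X i \<omega> > b \<and> Y k \<omega> > c}
                    / measure M {\<omega> \<in> space M. X i \<omega> > b \<and> Y k \<omega> > c})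
          \<longlongrightarrow> 0) (at_top \<times>\<^sub>F at_top \<times>\<^sub>F at_top))"

definition idx :: "nat \<Rightarrow> nat \<Rightarrow> (nat + nat) set" where
  "idx n m = Inl ` {1..n} \<union> Inr ` {1..m}"

definition joint_vec :: "nat \<Rightarrow> nat \<Rightarrow> (nat \<Rightarrow> 'a \<Rightarrow> real) \<Rightarrow> (nat \<Rightarrow> 'a \<Rightarrow> real)
    \<Rightarrow> 'a \<Rightarrow> (nat + nat \<Rightarrow> real)" where
  "joint_vec n m A B \<omega> = (\<lambda>k\<in>idx n m. case k of Inl i \<Rightarrow> A i \<omega> | Inr j \<Rightarrow> B j \<omega>)"

end

theory Submission
  imports Defs
begin


lemma tendsto_prod_at_top_seq:
  fixes f :: "real \<times> real \<Rightarrow> real"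
  assumes H: "\<And>s t. filterlim s at_top sequentially \<Longrightarrow> filterlim t at_top sequentially \<Longrightarrow>
               (\<lambda>n. f (s n, t n)) \<longlonglongrightarrow> L"
  shows "(f \<longlongrightarrow> L) (at_top \<times>\<^sub>F at_top)"
proof (rule tendstoI)
  fix e :: real assume e: "e > 0"
  show "\<forall>\<^sub>F z in at_top \<times>\<^sub>F at_top. dist (f z) L < e"
  proof (rule ccontr)
    assume nev: "\<not> (\<forall>\<^sub>F z in at_top \<times>\<^sub>F at_top. dist (f z) L < e)"
    have "\<forall>N::nat. \<exists>p. fst p \<ge> real N \<and> snd p \<ge> real N \<and> \<not> dist (f p) L < e"
    proof
      fix N :: nat
      show "\<exists>p. fst p \<ge> real N \<and> snd p \<ge> real N \<and> \<not> dist (f p) L < e"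
      proof (rule ccontr)
        assume "\<not> ?thesis"
        hence "\<forall>x y. x \<ge> real N \<longrightarrow> y \<ge> real N \<longrightarrow> dist (f (x, y)) L < e" by auto
        hence "\<forall>\<^sub>F z in at_top \<times>\<^sub>F at_top. dist (f z) L < e"
          unfolding eventually_prod_same by (intro exI[of _ "\<lambda>x. x \<ge> real N"]) (auto simp: eventually_ge_at_top)
        with nev show False by simp
      qed
    qed
    then obtain p where p: "\<And>N. fst (p N) \<ge> real N \<and> snd (p N) \<ge> real N \<and> \<not> dist (f (p N)) L < e"
      by metis
    have s: "filterlim (\<lambda>N. fst (p N)) at_top sequentially"
      by (rule filterlim_at_top_mono[OF filterlim_real_sequentially]) (use p in auto)
    have t: "filterlim (\<lambda>N. snd (p N)) at_top sequentially"
      by (rule filterlim_at_top_mono[OF filterlim_real_sequentially]) (use p in auto)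
    have "(\<lambda>N. f (fst (p N), snd (p N))) \<longlonglongrightarrow> L" by (rule H[OF s t])
    hence "eventually (\<lambda>N. dist (f (fst (p N), snd (p N))) L < e) sequentially"
      using e by (rule tendstoD)
    then obtain N where "dist (f (fst (p N), snd (p N))) L < e" by (auto simp: eventually_sequentially)
    with p[of N] show False by simp
  qed
qed

lemma filterlim_fst_scaled:
  assumes "c > (0::real)"
  shows "filterlim (\<lambda>z::real\<times>real. c * fst z) at_top (at_top \<times>\<^sub>F at_top)"
  by (rule filterlim_tendsto_pos_mult_at_top[OF tendsto_const assms filterlim_fst])

lemma filterlim_snd_scaled:
  assumes "c > (0::real)"
  shows "filterlim (\<lambda>z::real\<times>real. c * snd z) at_top (at_top \<times>\<^sub>F at_top)"
  by (rule filterlim_tendsto_pos_mult_at_top[OF tendsto_const assms filterlim_snd])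

lemma eventually_F2_pos: "\<forall>\<^sub>F z in at_top \<times>\<^sub>F (at_top::real filter). fst z > (0::real) \<and> snd z > (0::real)"
proof -
  have "\<forall>x y. (x::real) > 0 \<longrightarrow> (y::real) > 0 \<longrightarrow> fst (x,y) > 0 \<and> snd (x,y) > 0" by auto
  thus ?thesis unfolding eventually_prod_same using eventually_gt_at_top[of "0::real"] by blast
qed

lemma regvar_scaled:
  assumes "regvar_tail V a" "t > 0"
  shows "((\<lambda>x. V (t * x) / V x) \<longlongrightarrow> t powr (- a)) at_top"
  using assms unfolding regvar_tail_def by auto




locale cor_setup =
  fixes M :: "'a measure" and n m :: nat
    and X Y \<Theta> \<Delta> :: "nat \<Rightarrow> 'a \<Rightarrow> real"
    and C \<alpha> \<alpha>' :: "nat \<Rightarrow> real"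
  assumes P: "prob_space M"
    and nm: "n \<ge> 1" "m \<ge> 1"
    and meas_X: "\<And>i. i \<in> {1..n} \<Longrightarrow> X i \<in> borel_measurable M"
    and meas_Y: "\<And>j. j \<in> {1..m} \<Longrightarrow> Y j \<in> borel_measurable M"
    and meas_Th: "\<And>i. i \<in> {1..n} \<Longrightarrow> \<Theta> i \<in> borel_measurable M"
    and meas_De: "\<And>j. j \<in> {1..m} \<Longrightarrow> \<Delta> j \<in> borel_measurable M"
    and gtai: "GTAI M n m X Y"
    and Th_nonneg: "\<And>i. i \<in> {1..n} \<Longrightarrow> AE \<omega> in M. \<Theta> i \<omega> \<ge> 0"
    and De_nonneg: "\<And>j. j \<in> {1..m} \<Longrightarrow> AE \<omega> in M. \<Delta> j \<omega> \<ge> 0"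
    and Th_bdd: "\<And>i. i \<in> {1..n} \<Longrightarrow> \<exists>b. AE \<omega> in M. \<Theta> i \<omega> \<le> b"
    and De_bdd: "\<And>j. j \<in> {1..m} \<Longrightarrow> \<exists>b. AE \<omega> in M. \<Delta> j \<omega> \<le> b"
    and indep: "prob_space.indep_var M
                  (PiM (idx n m) (\<lambda>_. borel)) (joint_vec n m \<Theta> \<Delta>)
                  (PiM (idx n m) (\<lambda>_. borel)) (joint_vec n m X Y)"
    and sai: "\<And>i. i \<in> {1..min n m} \<Longrightarrow> SAI M (X i) (Y i) (C i)"
    and indep_XY: "\<And>i j. i \<in> {1..n} \<Longrightarrow> j \<in> {1..m} \<Longrightarrow> i \<noteq> j \<Longrightarrow>
                     prob_space.indep_var M borel (X i) borel (Y j)"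
    and alpha: "\<And>i. i \<in> {1..n} \<Longrightarrow> \<alpha> i \<ge> 0"
    and alpha': "\<And>j. j \<in> {1..m} \<Longrightarrow> \<alpha>' j \<ge> 0"
    and rv_F: "\<And>i. i \<in> {1..n} \<Longrightarrow> regvar_tail (tail M (X i)) (\<alpha> i)"
    and rv_G: "\<And>j. j \<in> {1..m} \<Longrightarrow> regvar_tail (tail M (Y j)) (\<alpha>' j)"
begin

sublocale prob_space M by (rule P)

abbreviation F2 :: "(real \<times> real) filter" where "F2 \<equiv> at_top \<times>\<^sub>F at_top"

definition JP :: "nat \<Rightarrow> nat \<Rightarrow> real \<Rightarrow> real \<Rightarrow> real" where
  "JP k j x y = measure M {\<omega> \<in> space M. X k \<omega> > x \<and> Y j \<omega> > y}"

definition cc :: "nat \<Rightarrow> nat \<Rightarrow> real" where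
  "cc k j = (if k = j then C k else 1)"

lemma F_pos: "i \<in> {1..n} \<Longrightarrow> tail M (X i) x > 0"
  using gtai unfolding GTAI_def unbounded_above_def tail_def by auto

lemma G_pos: "j \<in> {1..m} \<Longrightarrow> tail M (Y j) y > 0"
  using gtai unfolding GTAI_def unbounded_above_def tail_def by auto

lemma F_nz: "i \<in> {1..n} \<Longrightarrow> tail M (X i) x \<noteq> 0"
  using F_pos[of i x] by simp

lemma G_nz: "j \<in> {1..m} \<Longrightarrow> tail M (Y j) y \<noteq> 0"
  using G_pos[of j y] by simp

lemma cc_pos: "k \<in> {1..n} \<Longrightarrow> j \<in> {1..m} \<Longrightarrow> cc k j > 0"
  using sai[of k] unfolding cc_def SAI_def by auto

lemma JP_ratio:
  assumes k: "k \<in> {1..n}" and j: "j \<in> {1..m}"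
  shows "((\<lambda>z. JP k j (fst z) (snd z) / (tail M (X k) (fst z) * tail M (Y j) (snd z)))
          \<longlongrightarrow> cc k j) F2"
proof (cases "k = j")
  case True
  have kk: "k \<in> {1..min n m}" using k j True by auto
  have eq: "(\<lambda>(x, y). measure M {\<omega> \<in> space M. X k \<omega> > x \<and> Y k \<omega> > y})
        \<sim>[F2] (\<lambda>(x, y). C k * tail M (X k) x * tail M (Y k) y)"
    using sai[OF kk] unfolding SAI_def by auto
  have Cp: "C k > 0" using sai[OF kk] unfolding SAI_def by auto
  have "((\<lambda>z. (case z of (x, y) \<Rightarrow> measure M {\<omega> \<in> space M. X k \<omega> > x \<and> Y k \<omega> > y}) /
           (case z of (x, y) \<Rightarrow> C k * tail M (X k) x * tail M (Y k) y)) \<longlongrightarrow> 1) F2"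
    apply (rule asymp_equivD_strong[OF eq])
    using Cp F_pos[OF k] G_pos[OF j] True by (auto intro!: always_eventually split: prod.splits) (metis order_less_irrefl)+
  hence "((\<lambda>z. C k * ((case z of (x, y) \<Rightarrow> measure M {\<omega> \<in> space M. X k \<omega> > x \<and> Y k \<omega> > y}) /
           (case z of (x, y) \<Rightarrow> C k * tail M (X k) x * tail M (Y k) y))) \<longlongrightarrow> C k * 1) F2"
    by (intro tendsto_mult tendsto_const)
  moreover have "\<And>z. C k * ((case z of (x, y) \<Rightarrow> measure M {\<omega> \<in> space M. X k \<omega> > x \<and> Y k \<omega> > y}) /
           (case z of (x, y) \<Rightarrow> C k * tail M (X k) x * tail M (Y k) y)) =
        JP k j (fst z) (snd z) / (tail M (X k) (fst z) * tail M (Y j) (snd z))"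
    using Cp True by (auto simp: JP_def split: prod.splits)
  ultimately show ?thesis using True by (simp add: cc_def)
next
  case False
  have ind: "indep_var borel (X k) borel (Y j)" using indep_XY[OF k j False] .
  have "\<And>x y. JP k j x y = tail M (X k) x * tail M (Y j) y"
  proof -
    fix x y :: real
    have "\<P>(\<omega> in M. X k \<omega> \<in> {x<..} \<and> Y j \<omega> \<in> {y<..}) = \<P>(\<omega> in M. X k \<omega> \<in> {x<..}) * \<P>(\<omega> in M. Y j \<omega> \<in> {y<..})"
      by (rule prob_indep_random_variable[OF ind]) auto
    thus "JP k j x y = tail M (X k) x * tail M (Y j) y" by (simp add: JP_def tail_def)
  qed
  hence "\<And>z. JP k j (fst z) (snd z) / (tail M (X k) (fst z) * tail M (Y j) (snd z)) = 1"
    by (simp add: F_nz[OF k] G_nz[OF j])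
  hence e: "(\<lambda>z. JP k j (fst z) (snd z) / (tail M (X k) (fst z) * tail M (Y j) (snd z))) = (\<lambda>z. 1)"
    by blast
  show ?thesis using False unfolding e cc_def by simp
qed

lemma JP_ratio_scaled:
  assumes k: "k \<in> {1..n}" and j: "j \<in> {1..m}" and b: "b > 0" and c: "c > 0"
  shows "((\<lambda>z. JP k j (b * fst z) (c * snd z) / (tail M (X k) (fst z) * tail M (Y j) (snd z)))
          \<longlongrightarrow> cc k j * b powr (- \<alpha> k) * c powr (- \<alpha>' j)) F2"
proof -
  have lim: "filterlim (\<lambda>z. (b * fst z, c * snd z)) F2 F2"
    by (intro filterlim_Pair filterlim_fst_scaled filterlim_snd_scaled b c)
  have 1: "((\<lambda>z. JP k j (b * fst z) (c * snd z) / (tail M (X k) (b * fst z) * tail M (Y j) (c * snd z)))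
          \<longlongrightarrow> cc k j) F2"
    using filterlim_compose[OF JP_ratio[OF k j] lim] by simp
  have 2: "((\<lambda>z. tail M (X k) (b * fst z) / tail M (X k) (fst z)) \<longlongrightarrow> b powr (- \<alpha> k)) F2"
    using filterlim_compose[OF regvar_scaled[OF rv_F[OF k] b] filterlim_fst[where G="at_top::real filter"]] by simp
  have 3: "((\<lambda>z. tail M (Y j) (c * snd z) / tail M (Y j) (snd z)) \<longlongrightarrow> c powr (- \<alpha>' j)) F2"
    using filterlim_compose[OF regvar_scaled[OF rv_G[OF j] c] filterlim_snd[where F="at_top::real filter"]] by simp
  have "((\<lambda>z. (JP k j (b * fst z) (c * snd z) / (tail M (X k) (b * fst z) * tail M (Y j) (c * snd z))) *
     (tail M (X k) (b * fst z) / tail M (X k) (fst z)) * (tail M (Y j) (c * snd z) / tail M (Y j) (snd z)))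
     \<longlongrightarrow> cc k j * b powr (- \<alpha> k) * c powr (- \<alpha>' j)) F2"
    by (intro tendsto_mult 1 2 3)
  moreover have "\<And>z. (JP k j (b * fst z) (c * snd z) / (tail M (X k) (b * fst z) * tail M (Y j) (c * snd z))) *
     (tail M (X k) (b * fst z) / tail M (X k) (fst z)) * (tail M (Y j) (c * snd z) / tail M (Y j) (snd z))
     = JP k j (b * fst z) (c * snd z) / (tail M (X k) (fst z) * tail M (Y j) (snd z))"
    by (simp add: field_simps F_nz[OF k] G_nz[OF j])
  ultimately show ?thesis by (simp only:)
qed

end



context cor_setup begin

definition good :: "real \<Rightarrow> 'a \<Rightarrow> bool" where
  "good B \<omega> \<longleftrightarrow> (\<forall>i\<in>{1..n}. 0 \<le> \<Theta> i \<omega> \<and> \<Theta> i \<omega> \<le> B) \<and> (\<forall>j\<in>{1..m}. 0 \<le> \<Delta> j \<omega> \<and> \<Delta> j \<omega> \<le> B)"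

lemma good_exists: "\<exists>B. B > 0 \<and> (AE \<omega> in M. good B \<omega>)"
proof -
  from Th_bdd obtain bT where bT: "\<And>i. i \<in> {1..n} \<Longrightarrow> AE \<omega> in M. \<Theta> i \<omega> \<le> bT i" by metis
  from De_bdd obtain bD where bD: "\<And>j. j \<in> {1..m} \<Longrightarrow> AE \<omega> in M. \<Delta> j \<omega> \<le> bD j" by metis
  define B where "B = 1 + (\<Sum>i=1..n. \<bar>bT i\<bar>) + (\<Sum>j=1..m. \<bar>bD j\<bar>)"
  have B0: "B > 0" unfolding B_def by (smt (verit) sum_nonneg abs_ge_zero)
  have bTB: "bT i \<le> B" if "i \<in> {1..n}" for i
  proof -
    have "\<bar>bT i\<bar> \<le> (\<Sum>i=1..n. \<bar>bT i\<bar>)" by (rule member_le_sum) (use that in auto)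
    moreover have "0 \<le> (\<Sum>j=1..m. \<bar>bD j\<bar>)" by (simp add: sum_nonneg)
    ultimately show ?thesis unfolding B_def by linarith
  qed
  have bDB: "bD j \<le> B" if "j \<in> {1..m}" for j
  proof -
    have "\<bar>bD j\<bar> \<le> (\<Sum>j=1..m. \<bar>bD j\<bar>)" by (rule member_le_sum) (use that in auto)
    moreover have "0 \<le> (\<Sum>i=1..n. \<bar>bT i\<bar>)" by (simp add: sum_nonneg)
    ultimately show ?thesis unfolding B_def by linarith
  qed
  have "AE \<omega> in M. \<forall>i\<in>{1..n}. 0 \<le> \<Theta> i \<omega> \<and> \<Theta> i \<omega> \<le> B"
  proof (rule AE_finite_allI, simp)
    fix i assume i: "i \<in> {1..n}"
    show "AE \<omega> in M. 0 \<le> \<Theta> i \<omega> \<and> \<Theta> i \<omega> \<le> B"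
      using Th_nonneg[OF i] bT[OF i] by eventually_elim (use bTB[OF i] in auto)
  qed
  moreover have "AE \<omega> in M. \<forall>j\<in>{1..m}. 0 \<le> \<Delta> j \<omega> \<and> \<Delta> j \<omega> \<le> B"
  proof (rule AE_finite_allI, simp)
    fix j assume j: "j \<in> {1..m}"
    show "AE \<omega> in M. 0 \<le> \<Delta> j \<omega> \<and> \<Delta> j \<omega> \<le> B"
      using De_nonneg[OF j] bD[OF j] by eventually_elim (use bDB[OF j] in auto)
  qed
  ultimately have "AE \<omega> in M. good B \<omega>" unfolding good_def by eventually_elim auto
  with B0 show ?thesis by blast
qed

definition Bd :: real where "Bd = (SOME B. B > 0 \<and> (AE \<omega> in M. good B \<omega>))"

lemma Bd_pos: "Bd > 0" and AE_good: "AE \<omega> in M. good Bd \<omega>"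
  using someI_ex[OF good_exists] unfolding Bd_def by auto

definition NN :: "(real \<times> real) measure" where "NN = borel \<Otimes>\<^sub>M borel"
definition UU :: "nat \<Rightarrow> nat \<Rightarrow> 'a \<Rightarrow> real \<times> real" where "UU k j = (\<lambda>\<omega>. (\<Theta> k \<omega>, \<Delta> j \<omega>))"
definition VV :: "nat \<Rightarrow> nat \<Rightarrow> 'a \<Rightarrow> real \<times> real" where "VV k j = (\<lambda>\<omega>. (X k \<omega>, Y j \<omega>))"
definition mu where "mu k j = distr M NN (UU k j)"
definition nu where "nu k j = distr M NN (VV k j)"
definition gg :: "nat \<Rightarrow> nat \<Rightarrow> real \<Rightarrow> real \<Rightarrow> real \<times> real \<Rightarrow> real" where
  "gg k j x y z = measure (nu k j) {p \<in> space NN. fst z * fst p > x \<and> snd z * snd p > y}"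

lemma space_NN[simp]: "space NN = UNIV" by (simp add: NN_def space_pair_measure)

context
  fixes k j assumes k: "k \<in> {1..n}" and j: "j \<in> {1..m}"
begin

lemma UU_meas[measurable]: "UU k j \<in> measurable M NN"
  using meas_Th[OF k] meas_De[OF j] unfolding UU_def NN_def by measurable

lemma VV_meas[measurable]: "VV k j \<in> measurable M NN"
  using meas_X[OF k] meas_Y[OF j] unfolding VV_def NN_def by measurable

lemma indep_UV: "indep_var NN (UU k j) NN (VV k j)"
proof -
  have ik: "Inl k \<in> idx n m" and ij: "Inr j \<in> idx n m" using k j by (auto simp: idx_def)
  have g1: "(\<lambda>f. (f (Inl k), f (Inr j))) \<in> measurable (PiM (idx n m) (\<lambda>_. borel)) NN"
    unfolding NN_def
    by (intro measurable_Pair measurable_component_singleton[OF ik, where M="\<lambda>_. borel", simplified]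
        measurable_component_singleton[OF ij, where M="\<lambda>_. borel", simplified])
  have "indep_var NN ((\<lambda>f. (f (Inl k), f (Inr j))) \<circ> joint_vec n m \<Theta> \<Delta>)
                  NN ((\<lambda>f. (f (Inl k), f (Inr j))) \<circ> joint_vec n m X Y)"
    by (rule indep_var_compose[OF indep g1 g1])
  moreover have "(\<lambda>f. (f (Inl k), f (Inr j))) \<circ> joint_vec n m \<Theta> \<Delta> = UU k j"
    "(\<lambda>f. (f (Inl k), f (Inr j))) \<circ> joint_vec n m X Y = VV k j"
    using ik ij by (auto simp: joint_vec_def UU_def VV_def fun_eq_iff)
  ultimately show ?thesis by simp
qed

lemma prob_mu: "prob_space (mu k j)" unfolding mu_def by (rule prob_space_distr) simp
lemma prob_nu: "prob_space (nu k j)" unfolding nu_def by (rule prob_space_distr) simp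

lemma sets_mu[simp]: "sets (mu k j) = sets NN" by (simp add: mu_def)
lemma sets_nu[simp]: "sets (nu k j) = sets NN" by (simp add: nu_def)
lemma space_mu[simp]: "space (mu k j) = UNIV" by (simp add: mu_def)

lemma Q_sets: "{q \<in> space (NN \<Otimes>\<^sub>M NN). fst (fst q) * fst (snd q) > x \<and> snd (fst q) * snd (snd q) > y}
     \<in> sets (NN \<Otimes>\<^sub>M NN)"
  unfolding NN_def by measurable

lemma gg_meas[measurable]: "gg k j x y \<in> borel_measurable (mu k j)"
proof -
  interpret nu: prob_space "nu k j" by (rule prob_nu)
  let ?Q = "{q \<in> space (NN \<Otimes>\<^sub>M NN). fst (fst q) * fst (snd q) > x \<and> snd (fst q) * snd (snd q) > y}"
  have Q: "?Q \<in> sets (mu k j \<Otimes>\<^sub>M nu k j)"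
    using Q_sets by (simp add: sets_pair_measure_cong[OF sets_mu sets_nu])
  have "(\<lambda>z. emeasure (nu k j) (Pair z -` ?Q)) \<in> borel_measurable (mu k j)"
    by (rule nu.measurable_emeasure_Pair[OF Q])
  hence "(\<lambda>z. enn2real (emeasure (nu k j) (Pair z -` ?Q))) \<in> borel_measurable (mu k j)"
    by measurable
  moreover have "\<And>z. Pair z -` ?Q = {p \<in> space NN. fst z * fst p > x \<and> snd z * snd p > y}"
    by (auto simp: space_pair_measure)
  ultimately show ?thesis unfolding gg_def[abs_def] measure_def by simp
qed

lemma repr:
  "measure M {\<omega> \<in> space M. \<Theta> k \<omega> * X k \<omega> > x \<and> \<Delta> j \<omega> * Y j \<omega> > y} = (\<integral>z. gg k j x y z \<partial>mu k j)"
proof -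
  interpret nu: prob_space "nu k j" by (rule prob_nu)
  interpret mu: prob_space "mu k j" by (rule prob_mu)
  let ?Q = "{q \<in> space (NN \<Otimes>\<^sub>M NN). fst (fst q) * fst (snd q) > x \<and> snd (fst q) * snd (snd q) > y}"
  have Q: "?Q \<in> sets (mu k j \<Otimes>\<^sub>M nu k j)"
    using Q_sets by (simp add: sets_pair_measure_cong[OF sets_mu sets_nu])
  have dist: "mu k j \<Otimes>\<^sub>M nu k j = distr M (NN \<Otimes>\<^sub>M NN) (\<lambda>\<omega>. (UU k j \<omega>, VV k j \<omega>))"
    using indep_UV unfolding indep_var_distribution_eq mu_def nu_def by simp
  have rv: "(\<lambda>\<omega>. (UU k j \<omega>, VV k j \<omega>)) \<in> measurable M (NN \<Otimes>\<^sub>M NN)" by measurable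
  have e1: "(\<lambda>\<omega>. (UU k j \<omega>, VV k j \<omega>)) -` ?Q \<inter> space M = {\<omega> \<in> space M. \<Theta> k \<omega> * X k \<omega> > x \<and> \<Delta> j \<omega> * Y j \<omega> > y}"
    by (auto simp: space_pair_measure UU_def VV_def)
  have "measure M {\<omega> \<in> space M. \<Theta> k \<omega> * X k \<omega> > x \<and> \<Delta> j \<omega> * Y j \<omega> > y}
      = measure (distr M (NN \<Otimes>\<^sub>M NN) (\<lambda>\<omega>. (UU k j \<omega>, VV k j \<omega>))) ?Q"
    unfolding measure_distr[OF rv Q_sets] e1 ..
  also have "\<dots> = measure (mu k j \<Otimes>\<^sub>M nu k j) ?Q" by (simp add: dist)
  also have "\<dots> = enn2real (\<integral>\<^sup>+z. emeasure (nu k j) (Pair z -` ?Q) \<partial>mu k j)"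
    unfolding measure_def by (simp add: nu.emeasure_pair_measure_alt[OF Q])
  also have "\<dots> = enn2real (\<integral>\<^sup>+z. ennreal (gg k j x y z) \<partial>mu k j)"
  proof -
    have "\<And>z. Pair z -` ?Q = {p \<in> space NN. fst z * fst p > x \<and> snd z * snd p > y}"
      by (auto simp: space_pair_measure)
    hence "\<And>z. emeasure (nu k j) (Pair z -` ?Q) = ennreal (gg k j x y z)"
      unfolding gg_def by (simp add: nu.emeasure_eq_measure)
    thus ?thesis by simp
  qed
  also have "\<dots> = (\<integral>z. gg k j x y z \<partial>mu k j)"
    by (rule integral_eq_nn_integral[symmetric, OF gg_meas]) (auto simp: gg_def)
  finally show ?thesis .
qed

end
end



context cor_setup begin

lemma JP_mono:
  assumes k: "k \<in> {1..n}" and j: "j \<in> {1..m}" and "a' \<le> a" "b' \<le> b"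
  shows "JP k j a b \<le> JP k j a' b'"
  unfolding JP_def
  by (rule finite_measure_mono) (use assms meas_X[OF k] meas_Y[OF j] in auto)

context
  fixes k j assumes k: "k \<in> {1..n}" and j: "j \<in> {1..m}"
begin

lemma gg_JP:
  assumes "fst z > 0" "snd z > 0"
  shows "gg k j x y z = JP k j ((1 / fst z) * x) ((1 / snd z) * y)"
proof -
  have S: "{p \<in> space NN. fst z * fst p > x \<and> snd z * snd p > y} \<in> sets NN"
    unfolding NN_def by measurable
  have "gg k j x y z = measure M (VV k j -` {p \<in> space NN. fst z * fst p > x \<and> snd z * snd p > y} \<inter> space M)"
    unfolding gg_def nu_def by (rule measure_distr[OF VV_meas[OF k j] S])
  also have "VV k j -` {p \<in> space NN. fst z * fst p > x \<and> snd z * snd p > y} \<inter> space M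
      = {\<omega> \<in> space M. X k \<omega> > (1 / fst z) * x \<and> Y j \<omega> > (1 / snd z) * y}"
    using assms by (auto simp: VV_def field_simps)
  finally show ?thesis unfolding JP_def .
qed

lemma gg_zero:
  assumes "x \<ge> 0" "y \<ge> 0" "fst z = 0 \<or> snd z = 0"
  shows "gg k j x y z = 0"
  using assms unfolding gg_def by auto

lemma gg_nonneg: "gg k j x y z \<ge> 0" unfolding gg_def by simp

lemma gg_bound:
  assumes B: "B > 0" and z: "0 \<le> fst z" "fst z \<le> B" "0 \<le> snd z" "snd z \<le> B" and xy: "x > 0" "y > 0"
  shows "gg k j x y z \<le> JP k j ((1 / B) * x) ((1 / B) * y)"
proof (cases "fst z = 0 \<or> snd z = 0")
  case True
  thus ?thesis using gg_zero[of x y z] xy by (simp add: JP_def)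
next
  case False
  hence p: "fst z > 0" "snd z > 0" using z by auto
  have "(1 / B) * x \<le> (1 / fst z) * x" using p z xy B by (simp add: divide_left_mono)
  moreover have "(1 / B) * y \<le> (1 / snd z) * y" using p z xy B by (simp add: divide_left_mono)
  ultimately show ?thesis unfolding gg_JP[OF p] by (intro JP_mono k j)
qed

lemma AE_box: "AE z in mu k j. 0 \<le> fst z \<and> fst z \<le> Bd \<and> 0 \<le> snd z \<and> snd z \<le> Bd"
proof -
  have S: "{z \<in> space NN. 0 \<le> fst z \<and> fst z \<le> Bd \<and> 0 \<le> snd z \<and> snd z \<le> Bd} \<in> sets NN"
    unfolding NN_def by measurable
  show ?thesis unfolding mu_def
    by (subst AE_distr_iff[OF UU_meas[OF k j] S])
       (use AE_good in \<open>eventually_elim\<close>, use k j in \<open>auto simp: good_def UU_def\<close>)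
qed

definition Lf :: "real \<times> real \<Rightarrow> real" where
  "Lf z = cc k j * fst z powr \<alpha> k * snd z powr \<alpha>' j"

lemma pointwise:
  assumes z: "0 \<le> fst z" "0 \<le> snd z"
  shows "((\<lambda>w. gg k j (fst w) (snd w) z / (tail M (X k) (fst w) * tail M (Y j) (snd w))) \<longlongrightarrow> Lf z) F2"
proof (cases "fst z = 0 \<or> snd z = 0")
  case True
  have "\<forall>\<^sub>F w in F2. gg k j (fst w) (snd w) z / (tail M (X k) (fst w) * tail M (Y j) (snd w)) = Lf z"
    using eventually_F2_pos
    by eventually_elim (use True in \<open>auto simp: gg_zero Lf_def\<close>)
  thus ?thesis by (rule tendsto_eventually)
next
  case False
  hence p: "fst z > 0" "snd z > 0" using z by auto
  have lim: "((\<lambda>w. JP k j ((1 / fst z) * fst w) ((1 / snd z) * snd w) / (tail M (X k) (fst w) * tail M (Y j) (snd w)))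
          \<longlongrightarrow> cc k j * (1 / fst z) powr (- \<alpha> k) * (1 / snd z) powr (- \<alpha>' j)) F2"
    by (rule JP_ratio_scaled[OF k j]) (use p in auto)
  have e1: "(1 / fst z) powr (- \<alpha> k) = fst z powr \<alpha> k" using p by (simp add: powr_divide powr_minus_divide)
  have e2: "(1 / snd z) powr (- \<alpha>' j) = snd z powr \<alpha>' j" using p by (simp add: powr_divide powr_minus_divide)
  show ?thesis using lim unfolding e1 e2 Lf_def gg_JP[OF p] .
qed

lemma Lf_meas: "Lf \<in> borel_measurable (mu k j)"
proof -
  have "Lf \<in> borel_measurable NN" unfolding Lf_def NN_def by measurable
  thus ?thesis by (subst measurable_cong_sets[of "mu k j" NN borel borel]) (simp_all add: sets_mu[OF k j])
qed

lemma int_Lf: "(\<integral>z. Lf z \<partial>mu k j) = cc k j * (\<integral>\<omega>. \<Theta> k \<omega> powr \<alpha> k * \<Delta> j \<omega> powr \<alpha>' j \<partial>M)"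
proof -
  have "Lf \<in> borel_measurable NN" unfolding Lf_def NN_def by measurable
  hence "(\<integral>z. Lf z \<partial>mu k j) = (\<integral>\<omega>. Lf (UU k j \<omega>) \<partial>M)"
    unfolding mu_def by (rule integral_distr[OF UU_meas[OF k j]])
  also have "\<dots> = (\<integral>\<omega>. cc k j * (\<Theta> k \<omega> powr \<alpha> k * \<Delta> j \<omega> powr \<alpha>' j) \<partial>M)"
    by (simp add: Lf_def UU_def mult.assoc)
  finally show ?thesis by simp
qed

lemma breiman:
  "((\<lambda>w. measure M {\<omega> \<in> space M. \<Theta> k \<omega> * X k \<omega> > fst w \<and> \<Delta> j \<omega> * Y j \<omega> > snd w}
        / (tail M (X k) (fst w) * tail M (Y j) (snd w)))
     \<longlongrightarrow> cc k j * (\<integral>\<omega>. \<Theta> k \<omega> powr \<alpha> k * \<Delta> j \<omega> powr \<alpha>' j \<partial>M)) F2"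
proof (rule tendsto_prod_at_top_seq)
  fix s t :: "nat \<Rightarrow> real"
  assume s: "filterlim s at_top sequentially" and t: "filterlim t at_top sequentially"
  interpret mu: prob_space "mu k j" by (rule prob_mu[OF k j])
  define K where "K = cc k j * (1 / Bd) powr (- \<alpha> k) * (1 / Bd) powr (- \<alpha>' j) + 1"
  have lim1: "((\<lambda>w. JP k j ((1 / Bd) * fst w) ((1 / Bd) * snd w) / (tail M (X k) (fst w) * tail M (Y j) (snd w)))
          \<longlongrightarrow> cc k j * (1 / Bd) powr (- \<alpha> k) * (1 / Bd) powr (- \<alpha>' j)) F2"
    by (rule JP_ratio_scaled[OF k j]) (use Bd_pos in auto)
  have ev: "\<forall>\<^sub>F w in F2. fst w > 0 \<and> snd w > 0 \<and>
      JP k j ((1 / Bd) * fst w) ((1 / Bd) * snd w) / (tail M (X k) (fst w) * tail M (Y j) (snd w)) < K"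
  proof -
    have lt: "cc k j * (1 / Bd) powr (- \<alpha> k) * (1 / Bd) powr (- \<alpha>' j) < K" by (simp add: K_def)
    show ?thesis using eventually_F2_pos order_tendstoD(2)[OF lim1 lt]
      by eventually_elim auto
  qed
  have S: "filterlim (\<lambda>i. (s i, t i)) F2 sequentially" by (rule filterlim_Pair[OF s t])
  from filterlim_iff[THEN iffD1, OF S, rule_format, OF ev]
  obtain N0 where N0: "\<And>i. i \<ge> N0 \<Longrightarrow> s i > 0 \<and> t i > 0 \<and>
      JP k j ((1 / Bd) * s i) ((1 / Bd) * t i) / (tail M (X k) (s i) * tail M (Y j) (t i)) < K"
    by (auto simp: eventually_sequentially)
  define r where "r i z = gg k j (s (i + N0)) (t (i + N0)) z / (tail M (X k) (s (i + N0)) * tail M (Y j) (t (i + N0)))" for i z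
  have S': "filterlim (\<lambda>i. (s (i + N0), t (i + N0))) F2 sequentially"
    by (rule filterlim_compose[OF S filterlim_add_const_nat_at_top])
  have conv: "(\<lambda>i. integral\<^sup>L (mu k j) (r i)) \<longlonglongrightarrow> integral\<^sup>L (mu k j) Lf"
  proof (rule integral_dominated_convergence[where w="\<lambda>_. K"])
    show "Lf \<in> borel_measurable (mu k j)" by (rule Lf_meas)
    show "r i \<in> borel_measurable (mu k j)" for i
      unfolding r_def[abs_def] using gg_meas[OF k j] by measurable
    show "integrable (mu k j) (\<lambda>_. K)" by simp
    show "AE z in mu k j. (\<lambda>i. r i z) \<longlonglongrightarrow> Lf z"
      using AE_box
    proof eventually_elim
      case (elim z)
      show ?case unfolding r_def
        using filterlim_compose[OF pointwise S'] elim by simp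
    qed
    show "AE z in mu k j. norm (r i z) \<le> K" for i
      using AE_box
    proof eventually_elim
      case (elim z)
      have pos: "s (i + N0) > 0" "t (i + N0) > 0" and lt: "JP k j ((1 / Bd) * s (i + N0)) ((1 / Bd) * t (i + N0))
           / (tail M (X k) (s (i + N0)) * tail M (Y j) (t (i + N0))) < K" using N0[of "i + N0"] by auto
      have den: "tail M (X k) (s (i + N0)) * tail M (Y j) (t (i + N0)) > 0"
        using F_pos[OF k] G_pos[OF j] by simp
      have "gg k j (s (i + N0)) (t (i + N0)) z \<le> JP k j ((1 / Bd) * s (i + N0)) ((1 / Bd) * t (i + N0))"
        using gg_bound[OF Bd_pos _ _ _ _ pos] elim by auto
      hence "r i z \<le> JP k j ((1 / Bd) * s (i + N0)) ((1 / Bd) * t (i + N0))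
           / (tail M (X k) (s (i + N0)) * tail M (Y j) (t (i + N0)))"
        unfolding r_def using den by (simp add: divide_right_mono)
      moreover have "r i z \<ge> 0" unfolding r_def using den gg_nonneg by simp
      ultimately show ?case using lt by simp
    qed
  qed
  have "\<And>i. integral\<^sup>L (mu k j) (r i) =
      measure M {\<omega> \<in> space M. \<Theta> k \<omega> * X k \<omega> > s (i + N0) \<and> \<Delta> j \<omega> * Y j \<omega> > t (i + N0)}
        / (tail M (X k) (s (i + N0)) * tail M (Y j) (t (i + N0)))"
    unfolding r_def by (simp add: repr[OF k j])
  with conv have "(\<lambda>i. measure M {\<omega> \<in> space M. \<Theta> k \<omega> * X k \<omega> > s (i + N0) \<and> \<Delta> j \<omega> * Y j \<omega> > t (i + N0)}
        / (tail M (X k) (s (i + N0)) * tail M (Y j) (t (i + N0)))) \<longlonglongrightarrow>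
      cc k j * (\<integral>\<omega>. \<Theta> k \<omega> powr \<alpha> k * \<Delta> j \<omega> powr \<alpha>' j \<partial>M)"
    by (simp add: int_Lf)
  hence "(\<lambda>i. (\<lambda>w. measure M {\<omega> \<in> space M. \<Theta> k \<omega> * X k \<omega> > fst w \<and> \<Delta> j \<omega> * Y j \<omega> > snd w}
        / (tail M (X k) (fst w) * tail M (Y j) (snd w))) (s (i + N0), t (i + N0))) \<longlonglongrightarrow>
      cc k j * (\<integral>\<omega>. \<Theta> k \<omega> powr \<alpha> k * \<Delta> j \<omega> powr \<alpha>' j \<partial>M)" by simp
  thus "(\<lambda>i. (\<lambda>w. measure M {\<omega> \<in> space M. \<Theta> k \<omega> * X k \<omega> > fst w \<and> \<Delta> j \<omega> * Y j \<omega> > snd w}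
        / (tail M (X k) (fst w) * tail M (Y j) (snd w))) (s i, t i)) \<longlonglongrightarrow>
      cc k j * (\<integral>\<omega>. \<Theta> k \<omega> powr \<alpha> k * \<Delta> j \<omega> powr \<alpha>' j \<partial>M)"
    by (rule LIMSEQ_offset)
qed

end
end



context cor_setup begin

definition W :: "nat \<Rightarrow> nat \<Rightarrow> real" where
  "W k j = cc k j * (\<integral>\<omega>. \<Theta> k \<omega> powr \<alpha> k * \<Delta> j \<omega> powr \<alpha>' j \<partial>M)"

abbreviation FF where "FF k x \<equiv> tail M (X k) x"
abbreviation GG where "GG j y \<equiv> tail M (Y j) y"

definition R :: "real \<times> real \<Rightarrow> real" where
  "R w = (\<Sum>p\<in>{1..n} \<times> {1..m}. W (fst p) (snd p) * FF (fst p) (fst w) * GG (snd p) (snd w))"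

definition okkj :: "nat \<Rightarrow> nat \<Rightarrow> (real \<times> real \<Rightarrow> real) \<Rightarrow> bool" where
  "okkj k j E \<longleftrightarrow> ((\<lambda>w. E w / (FF k (fst w) * GG j (snd w))) \<longlongrightarrow> 0) F2 \<and>
                  (W k j = 0 \<longrightarrow> eventually (\<lambda>w. E w = 0) F2)"

lemma tail_nonneg[simp]: "tail M Z x \<ge> 0" by (simp add: tail_def)

lemma W_nonneg: "k \<in> {1..n} \<Longrightarrow> j \<in> {1..m} \<Longrightarrow> W k j \<ge> 0"
  unfolding W_def using cc_pos[of k j] by (intro mult_nonneg_nonneg integral_nonneg) auto

lemma R_ge: assumes "k \<in> {1..n}" "j \<in> {1..m}" shows "R w \<ge> W k j * FF k (fst w) * GG j (snd w)"
proof -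
  have "W (fst (k,j)) (snd (k,j)) * FF (fst (k,j)) (fst w) * GG (snd (k,j)) (snd w)
       \<le> (\<Sum>p\<in>{1..n} \<times> {1..m}. W (fst p) (snd p) * FF (fst p) (fst w) * GG (snd p) (snd w))"
    by (rule member_le_sum) (use assms in \<open>auto intro!: mult_nonneg_nonneg W_nonneg\<close>)
  thus ?thesis unfolding R_def by simp
qed

lemma R_nonneg: "R w \<ge> 0"
  unfolding R_def by (intro sum_nonneg) (auto intro!: mult_nonneg_nonneg W_nonneg)

lemma ok_negl:
  assumes k: "k \<in> {1..n}" and j: "j \<in> {1..m}" and ok: "okkj k j E"
  shows "((\<lambda>w. E w / R w) \<longlongrightarrow> 0) F2"
proof (cases "W k j = 0")
  case True
  with ok have "eventually (\<lambda>w. E w = 0) F2" unfolding okkj_def by auto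
  hence "eventually (\<lambda>w. E w / R w = 0) F2" by eventually_elim simp
  thus ?thesis by (rule tendsto_eventually)
next
  case False
  hence Wp: "W k j > 0" using W_nonneg[OF k j] by simp
  have lim: "((\<lambda>w. E w / (FF k (fst w) * GG j (snd w))) \<longlongrightarrow> 0) F2" using ok unfolding okkj_def by auto
  hence lim2: "((\<lambda>w. norm (E w / (FF k (fst w) * GG j (snd w))) / W k j) \<longlongrightarrow> 0) F2"
    using tendsto_divide[OF tendsto_norm_zero[OF lim] tendsto_const[of "W k j"]] Wp by simp
  show ?thesis
  proof (rule Lim_null_comparison[OF _ lim2], rule always_eventually, rule allI)
    fix w
    have den: "FF k (fst w) * GG j (snd w) > 0" using F_pos[OF k] G_pos[OF j] by simp
    have Rge: "R w \<ge> W k j * (FF k (fst w) * GG j (snd w))" using R_ge[OF k j, of w] by (simp add: mult.assoc)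
    have Rp: "R w > 0" by (rule less_le_trans[OF mult_pos_pos[OF Wp den] Rge])
    have "norm (E w / R w) = \<bar>E w\<bar> / R w" using Rp by simp
    also have "\<dots> \<le> \<bar>E w\<bar> / (W k j * (FF k (fst w) * GG j (snd w)))"
      by (rule divide_left_mono[OF Rge]) (use Wp den Rp in \<open>auto intro!: mult_pos_pos\<close>)
    also have "\<dots> = norm (E w / (FF k (fst w) * GG j (snd w))) / W k j"
      using den Wp by (simp add: abs_divide field_simps)
    finally show "norm (E w / R w) \<le> norm (E w / (FF k (fst w) * GG j (snd w))) / W k j" .
  qed
qed

lemma W_zero_AE:
  assumes k: "k \<in> {1..n}" and j: "j \<in> {1..m}" and W0: "W k j = 0"
  shows "AE \<omega> in M. \<Theta> k \<omega> = 0 \<or> \<Delta> j \<omega> = 0"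
proof -
  note [measurable] = meas_Th[OF k] meas_De[OF j]
  have int0: "(\<integral>\<omega>. \<Theta> k \<omega> powr \<alpha> k * \<Delta> j \<omega> powr \<alpha>' j \<partial>M) = 0"
    using W0 cc_pos[OF k j] unfolding W_def by simp
  have "integrable M (\<lambda>\<omega>. \<Theta> k \<omega> powr \<alpha> k * \<Delta> j \<omega> powr \<alpha>' j)"
  proof (rule integrable_const_bound[where B="Bd powr \<alpha> k * Bd powr \<alpha>' j"])
    show "AE \<omega> in M. norm (\<Theta> k \<omega> powr \<alpha> k * \<Delta> j \<omega> powr \<alpha>' j) \<le> Bd powr \<alpha> k * Bd powr \<alpha>' j"
      using AE_good
    proof eventually_elim
      case (elim \<omega>)
      hence "0 \<le> \<Theta> k \<omega>" "\<Theta> k \<omega> \<le> Bd" "0 \<le> \<Delta> j \<omega>" "\<Delta> j \<omega> \<le> Bd" using k j unfolding good_def by auto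
      hence "\<Theta> k \<omega> powr \<alpha> k \<le> Bd powr \<alpha> k" "\<Delta> j \<omega> powr \<alpha>' j \<le> Bd powr \<alpha>' j"
        using alpha[OF k] alpha'[OF j] by (auto intro: powr_mono2)
      thus ?case by (simp add: mult_mono)
    qed
  qed measurable
  moreover have nn: "AE \<omega> in M. 0 \<le> \<Theta> k \<omega> powr \<alpha> k * \<Delta> j \<omega> powr \<alpha>' j" by (rule AE_I2) simp
  ultimately have "AE \<omega> in M. \<Theta> k \<omega> powr \<alpha> k * \<Delta> j \<omega> powr \<alpha>' j = 0"
    using integral_nonneg_eq_0_iff_AE int0 by blast
  thus ?thesis by eventually_elim simp
qed

lemma null_event:
  assumes k: "k \<in> {1..n}" and j: "j \<in> {1..m}" and W0: "W k j = 0"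
    and sub: "\<And>\<omega>. \<omega> \<in> space M \<Longrightarrow> P \<omega> \<Longrightarrow> \<Theta> k \<omega> \<noteq> 0 \<and> \<Delta> j \<omega> \<noteq> 0"
  shows "measure M {\<omega> \<in> space M. P \<omega>} = 0"
proof -
  have "AE \<omega> in M. \<not> P \<omega>"
    using W_zero_AE[OF k j W0] AE_space by eventually_elim (use sub in blast)
  hence "emeasure M {\<omega> \<in> space M. P \<omega>} = 0" by (rule emeasure_eq_0_AE)
  thus ?thesis by (simp add: measure_def)
qed

lemma breiman_scaled:
  assumes k: "k \<in> {1..n}" and j: "j \<in> {1..m}" and q: "q > 0"
  shows "((\<lambda>w. measure M {\<omega> \<in> space M. \<Theta> k \<omega> * X k \<omega> > q * fst w \<and> \<Delta> j \<omega> * Y j \<omega> > q * snd w}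
        / (FF k (fst w) * GG j (snd w))) \<longlongrightarrow> W k j * q powr (- \<alpha> k) * q powr (- \<alpha>' j)) F2"
proof -
  have lim: "filterlim (\<lambda>z. (q * fst z, q * snd z)) F2 F2"
    by (intro filterlim_Pair filterlim_fst_scaled filterlim_snd_scaled q)
  have 1: "((\<lambda>w. measure M {\<omega> \<in> space M. \<Theta> k \<omega> * X k \<omega> > q * fst w \<and> \<Delta> j \<omega> * Y j \<omega> > q * snd w}
        / (FF k (q * fst w) * GG j (q * snd w))) \<longlongrightarrow> W k j) F2"
    using filterlim_compose[OF breiman[OF k j] lim] unfolding W_def by simp
  have 2: "((\<lambda>z. FF k (q * fst z) / FF k (fst z)) \<longlongrightarrow> q powr (- \<alpha> k)) F2"
    using filterlim_compose[OF regvar_scaled[OF rv_F[OF k] q] filterlim_fst[where G="at_top::real filter"]] by simp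
  have 3: "((\<lambda>z. GG j (q * snd z) / GG j (snd z)) \<longlongrightarrow> q powr (- \<alpha>' j)) F2"
    using filterlim_compose[OF regvar_scaled[OF rv_G[OF j] q] filterlim_snd[where F="at_top::real filter"]] by simp
  have "((\<lambda>w. (measure M {\<omega> \<in> space M. \<Theta> k \<omega> * X k \<omega> > q * fst w \<and> \<Delta> j \<omega> * Y j \<omega> > q * snd w}
        / (FF k (q * fst w) * GG j (q * snd w))) * (FF k (q * fst w) / FF k (fst w)) * (GG j (q * snd w) / GG j (snd w)))
     \<longlongrightarrow> W k j * q powr (- \<alpha> k) * q powr (- \<alpha>' j)) F2"
    by (intro tendsto_mult 1 2 3)
  moreover have "\<And>w. (measure M {\<omega> \<in> space M. \<Theta> k \<omega> * X k \<omega> > q * fst w \<and> \<Delta> j \<omega> * Y j \<omega> > q * snd w}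
        / (FF k (q * fst w) * GG j (q * snd w))) * (FF k (q * fst w) / FF k (fst w)) * (GG j (q * snd w) / GG j (snd w))
      = measure M {\<omega> \<in> space M. \<Theta> k \<omega> * X k \<omega> > q * fst w \<and> \<Delta> j \<omega> * Y j \<omega> > q * snd w}
        / (FF k (fst w) * GG j (snd w))"
    by (simp add: field_simps F_nz[OF k] G_nz[OF j])
  ultimately show ?thesis by (simp only:)
qed

lemma main_ok:
  assumes k: "k \<in> {1..n}" and j: "j \<in> {1..m}" and q: "q > 0"
  shows "okkj k j (\<lambda>w. measure M {\<omega> \<in> space M. \<Theta> k \<omega> * X k \<omega> > q * fst w \<and> \<Delta> j \<omega> * Y j \<omega> > q * snd w}
           - W k j * q powr (- \<alpha> k) * q powr (- \<alpha>' j) * FF k (fst w) * GG j (snd w))"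
  unfolding okkj_def
proof (intro conjI impI)
  have "((\<lambda>w. measure M {\<omega> \<in> space M. \<Theta> k \<omega> * X k \<omega> > q * fst w \<and> \<Delta> j \<omega> * Y j \<omega> > q * snd w}
        / (FF k (fst w) * GG j (snd w)) - W k j * q powr (- \<alpha> k) * q powr (- \<alpha>' j))
     \<longlongrightarrow> W k j * q powr (- \<alpha> k) * q powr (- \<alpha>' j) - W k j * q powr (- \<alpha> k) * q powr (- \<alpha>' j)) F2"
    by (intro tendsto_diff breiman_scaled k j q tendsto_const)
  moreover have "\<And>w. measure M {\<omega> \<in> space M. \<Theta> k \<omega> * X k \<omega> > q * fst w \<and> \<Delta> j \<omega> * Y j \<omega> > q * snd w}
        / (FF k (fst w) * GG j (snd w)) - W k j * q powr (- \<alpha> k) * q powr (- \<alpha>' j) =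
      (measure M {\<omega> \<in> space M. \<Theta> k \<omega> * X k \<omega> > q * fst w \<and> \<Delta> j \<omega> * Y j \<omega> > q * snd w}
           - W k j * q powr (- \<alpha> k) * q powr (- \<alpha>' j) * FF k (fst w) * GG j (snd w)) / (FF k (fst w) * GG j (snd w))"
    by (simp add: field_simps F_nz[OF k] G_nz[OF j])
  ultimately show "((\<lambda>w. (measure M {\<omega> \<in> space M. \<Theta> k \<omega> * X k \<omega> > q * fst w \<and> \<Delta> j \<omega> * Y j \<omega> > q * snd w}
           - W k j * q powr (- \<alpha> k) * q powr (- \<alpha>' j) * FF k (fst w) * GG j (snd w)) / (FF k (fst w) * GG j (snd w)))
       \<longlongrightarrow> 0) F2" by simp
next
  assume W0: "W k j = 0"
  show "\<forall>\<^sub>F w in F2. measure M {\<omega> \<in> space M. \<Theta> k \<omega> * X k \<omega> > q * fst w \<and> \<Delta> j \<omega> * Y j \<omega> > q * snd w}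
           - W k j * q powr (- \<alpha> k) * q powr (- \<alpha>' j) * FF k (fst w) * GG j (snd w) = 0"
    using eventually_F2_pos
  proof eventually_elim
    case (elim w)
    have "q * fst w > 0" "q * snd w > 0" using elim q by auto
    hence "measure M {\<omega> \<in> space M. \<Theta> k \<omega> * X k \<omega> > q * fst w \<and> \<Delta> j \<omega> * Y j \<omega> > q * snd w} = 0"
      by (intro null_event[OF k j W0]) auto
    thus ?case using W0 by simp
  qed
qed

end



lemma squeeze_bad:
  fixes E H J D :: "real \<times> real \<Rightarrow> real"
  assumes E0: "\<And>w. 0 \<le> E w" and EH: "eventually (\<lambda>w. E w \<le> H w) F"
    and H0: "\<And>w. 0 \<le> H w" and HJ: "\<And>w. H w \<le> J w"
    and limHJ: "((\<lambda>w. H w / J w) \<longlongrightarrow> 0) F" and limJ: "((\<lambda>w. J w / D w) \<longlongrightarrow> L) F"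
    and D0: "\<And>w. D w > 0"
  shows "((\<lambda>w. E w / D w) \<longlongrightarrow> 0) F"
proof -
  have eq: "\<And>w. H w / D w = (H w / J w) * (J w / D w)"
  proof -
    fix w show "H w / D w = (H w / J w) * (J w / D w)"
    proof (cases "J w = 0")
      case True
      hence "H w = 0" using H0[of w] HJ[of w] by simp
      thus ?thesis using True by simp
    next
      case False thus ?thesis using D0[of w] by (simp add: field_simps)
    qed
  qed
  have "((\<lambda>w. (H w / J w) * (J w / D w)) \<longlongrightarrow> 0 * L) F" by (intro tendsto_mult limHJ limJ)
  hence limH: "((\<lambda>w. H w / D w) \<longlongrightarrow> 0) F" unfolding eq by simp
  show ?thesis
  proof (rule tendsto_sandwich[OF _ _ tendsto_const limH])
    show "\<forall>\<^sub>F w in F. 0 \<le> E w / D w" using E0 D0 by (intro always_eventually) (simp add: less_imp_le)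
    show "\<forall>\<^sub>F w in F. E w / D w \<le> H w / D w" using EH by eventually_elim (use D0 in \<open>simp add: divide_right_mono less_imp_le\<close>)
  qed
qed

lemma scale_lemma:
  fixes t B u v :: real
  assumes "0 \<le> t" "t \<le> B" "0 < B" "0 \<le> v" "t * u > v"
  shows "u > (v / B)"
proof -
  have u: "u > 0"
  proof (rule ccontr)
    assume "\<not> u > 0" hence "t * u \<le> 0" using assms(1) by (simp add: mult_nonneg_nonpos)
    thus False using assms by simp
  qed
  have "t * u \<le> B * u" using assms u by (simp add: mult_right_mono)
  hence "B * u > v" using assms by simp
  thus ?thesis using assms(3) by (simp add: pos_divide_less_eq mult.commute)
qed

context cor_setup begin

lemma filterlim_triple:
  assumes "a > 0" "b > 0" "c > 0"
  shows "filterlim (\<lambda>w::real\<times>real. (a * fst w, b * fst w, c * snd w)) (at_top \<times>\<^sub>F at_top \<times>\<^sub>F at_top) F2"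
  by (intro filterlim_Pair filterlim_fst_scaled filterlim_snd_scaled assms)

lemma filterlim_triple':
  assumes "a > 0" "b > 0" "c > 0"
  shows "filterlim (\<lambda>w::real\<times>real. (a * snd w, b * fst w, c * snd w)) (at_top \<times>\<^sub>F at_top \<times>\<^sub>F at_top) F2"
  by (intro filterlim_Pair filterlim_fst_scaled filterlim_snd_scaled assms)

lemma badX_ok:
  assumes i: "i \<in> {1..n}" and k: "k \<in> {1..n}" and ik: "i \<noteq> k" and j: "j \<in> {1..m}"
    and a: "a > 0" and b: "b > 0" and c: "c > 0"
  shows "okkj k j (\<lambda>w. measure M {\<omega> \<in> space M. \<bar>\<Theta> i \<omega> * X i \<omega>\<bar> > a * fst w \<and>
            \<Theta> k \<omega> * X k \<omega> > b * fst w \<and> \<Delta> j \<omega> * Y j \<omega> > c * snd w})"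
  unfolding okkj_def
proof (intro conjI impI)
  note [measurable] = meas_X[OF i] meas_X[OF k] meas_Y[OF j] meas_Th[OF i] meas_Th[OF k] meas_De[OF j]
  define a' b' c' where "a' = a / Bd" "b' = b / Bd" "c' = c / Bd"
  have pos: "a' > 0" "b' > 0" "c' > 0" unfolding a'_b'_c'_def using a b c Bd_pos by auto
  define E where "E w = measure M {\<omega> \<in> space M. \<bar>\<Theta> i \<omega> * X i \<omega>\<bar> > a * fst w \<and>
            \<Theta> k \<omega> * X k \<omega> > b * fst w \<and> \<Delta> j \<omega> * Y j \<omega> > c * snd w}" for w
  define H where "H w = measure M {\<omega> \<in> space M. \<bar>X i \<omega>\<bar> > a' * fst w \<and> X k \<omega> > b' * fst w \<and> Y j \<omega> > c' * snd w}" for w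
  define J where "J w = JP k j (b' * fst w) (c' * snd w)" for w
  have gt: "((\<lambda>(a, b, c). measure M {\<omega> \<in> space M. \<bar>X i \<omega>\<bar> > a \<and> X k \<omega> > b \<and> Y j \<omega> > c}
                    / measure M {\<omega> \<in> space M. X k \<omega> > b \<and> Y j \<omega> > c})
          \<longlongrightarrow> 0) (at_top \<times>\<^sub>F at_top \<times>\<^sub>F at_top)"
    using gtai i k j ik unfolding GTAI_def by blast
  have limHJ: "((\<lambda>w. H w / J w) \<longlongrightarrow> 0) F2"
    using filterlim_compose[OF gt filterlim_triple[OF pos]] by (simp add: H_def J_def JP_def)
  have limJ: "((\<lambda>w. J w / (FF k (fst w) * GG j (snd w))) \<longlongrightarrow> cc k j * b' powr (- \<alpha> k) * c' powr (- \<alpha>' j)) F2"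
    unfolding J_def by (rule JP_ratio_scaled[OF k j pos(2,3)])
  have HJ: "H w \<le> J w" for w
    unfolding H_def J_def JP_def by (rule finite_measure_mono) auto
  have EH: "\<forall>\<^sub>F w in F2. E w \<le> H w"
    using eventually_F2_pos
  proof eventually_elim
    case (elim w)
    note wpos = elim
    show ?case unfolding E_def H_def
    proof (rule finite_measure_mono_AE)
      show "AE \<omega> in M. \<omega> \<in> {\<omega> \<in> space M. \<bar>\<Theta> i \<omega> * X i \<omega>\<bar> > a * fst w \<and>
            \<Theta> k \<omega> * X k \<omega> > b * fst w \<and> \<Delta> j \<omega> * Y j \<omega> > c * snd w} \<longrightarrow>
          \<omega> \<in> {\<omega> \<in> space M. \<bar>X i \<omega>\<bar> > a' * fst w \<and> X k \<omega> > b' * fst w \<and> Y j \<omega> > c' * snd w}"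
        using AE_good
      proof eventually_elim
        case (elim \<omega>)
        have g: "0 \<le> \<Theta> i \<omega>" "\<Theta> i \<omega> \<le> Bd" "0 \<le> \<Theta> k \<omega>" "\<Theta> k \<omega> \<le> Bd" "0 \<le> \<Delta> j \<omega>" "\<Delta> j \<omega> \<le> Bd"
          using elim i k j unfolding good_def by auto
        show ?case
        proof (intro impI)
          assume "\<omega> \<in> {\<omega> \<in> space M. \<bar>\<Theta> i \<omega> * X i \<omega>\<bar> > a * fst w \<and>
            \<Theta> k \<omega> * X k \<omega> > b * fst w \<and> \<Delta> j \<omega> * Y j \<omega> > c * snd w}"
          hence h: "\<omega> \<in> space M" "\<Theta> i \<omega> * \<bar>X i \<omega>\<bar> > a * fst w" "\<Theta> k \<omega> * X k \<omega> > b * fst w"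
            "\<Delta> j \<omega> * Y j \<omega> > c * snd w" using g by (auto simp: abs_mult)
          have "\<bar>X i \<omega>\<bar> > a * fst w / Bd" by (rule scale_lemma[OF g(1,2) Bd_pos _ h(2)]) (use a wpos in auto)
          moreover have "X k \<omega> > b * fst w / Bd" by (rule scale_lemma[OF g(3,4) Bd_pos _ h(3)]) (use b wpos in auto)
          moreover have "Y j \<omega> > c * snd w / Bd" by (rule scale_lemma[OF g(5,6) Bd_pos _ h(4)]) (use c wpos in auto)
          ultimately show "\<omega> \<in> {\<omega> \<in> space M. \<bar>X i \<omega>\<bar> > a' * fst w \<and> X k \<omega> > b' * fst w \<and> Y j \<omega> > c' * snd w}"
            using h(1) unfolding a'_b'_c'_def by simp
        qed
      qed
    qed measurable
  qed
  have "((\<lambda>w. E w / (FF k (fst w) * GG j (snd w))) \<longlongrightarrow> 0) F2"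
    by (rule squeeze_bad[OF _ EH _ HJ limHJ limJ]) (auto simp: E_def H_def F_pos[OF k] G_pos[OF j])
  thus "((\<lambda>w. measure M {\<omega> \<in> space M. \<bar>\<Theta> i \<omega> * X i \<omega>\<bar> > a * fst w \<and>
            \<Theta> k \<omega> * X k \<omega> > b * fst w \<and> \<Delta> j \<omega> * Y j \<omega> > c * snd w} / (FF k (fst w) * GG j (snd w))) \<longlongrightarrow> 0) F2"
    unfolding E_def .
next
  assume W0: "W k j = 0"
  show "\<forall>\<^sub>F w in F2. measure M {\<omega> \<in> space M. \<bar>\<Theta> i \<omega> * X i \<omega>\<bar> > a * fst w \<and>
            \<Theta> k \<omega> * X k \<omega> > b * fst w \<and> \<Delta> j \<omega> * Y j \<omega> > c * snd w} = 0"
    using eventually_F2_pos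
  proof eventually_elim
    case (elim w)
    have "b * fst w > 0" "c * snd w > 0" using elim b c by auto
    thus ?case by (intro null_event[OF k j W0]) auto
  qed
qed

lemma badY_ok:
  assumes k: "k \<in> {1..n}" and j: "j \<in> {1..m}" and l: "l \<in> {1..m}" and lj: "l \<noteq> j"
    and a: "a > 0" and b: "b > 0" and c: "c > 0"
  shows "okkj k j (\<lambda>w. measure M {\<omega> \<in> space M. \<Theta> k \<omega> * X k \<omega> > b * fst w \<and>
            \<Delta> j \<omega> * Y j \<omega> > c * snd w \<and> \<bar>\<Delta> l \<omega> * Y l \<omega>\<bar> > a * snd w})"
  unfolding okkj_def
proof (intro conjI impI)
  note [measurable] = meas_Y[OF l] meas_X[OF k] meas_Y[OF j] meas_De[OF l] meas_Th[OF k] meas_De[OF j]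
  define a' b' c' where "a' = a / Bd" "b' = b / Bd" "c' = c / Bd"
  have pos: "a' > 0" "b' > 0" "c' > 0" unfolding a'_b'_c'_def using a b c Bd_pos by auto
  define E where "E w = measure M {\<omega> \<in> space M. \<Theta> k \<omega> * X k \<omega> > b * fst w \<and>
            \<Delta> j \<omega> * Y j \<omega> > c * snd w \<and> \<bar>\<Delta> l \<omega> * Y l \<omega>\<bar> > a * snd w}" for w
  define H where "H w = measure M {\<omega> \<in> space M. \<bar>Y l \<omega>\<bar> > a' * snd w \<and> X k \<omega> > b' * fst w \<and> Y j \<omega> > c' * snd w}" for w
  define J where "J w = JP k j (b' * fst w) (c' * snd w)" for w
  have gt: "((\<lambda>(a, b, c). measure M {\<omega> \<in> space M. \<bar>Y l \<omega>\<bar> > a \<and> X k \<omega> > b \<and> Y j \<omega> > c}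
                    / measure M {\<omega> \<in> space M. X k \<omega> > b \<and> Y j \<omega> > c})
          \<longlongrightarrow> 0) (at_top \<times>\<^sub>F at_top \<times>\<^sub>F at_top)"
    using gtai k j l lj unfolding GTAI_def by blast
  have limHJ: "((\<lambda>w. H w / J w) \<longlongrightarrow> 0) F2"
    using filterlim_compose[OF gt filterlim_triple'[OF pos]] by (simp add: H_def J_def JP_def)
  have limJ: "((\<lambda>w. J w / (FF k (fst w) * GG j (snd w))) \<longlongrightarrow> cc k j * b' powr (- \<alpha> k) * c' powr (- \<alpha>' j)) F2"
    unfolding J_def by (rule JP_ratio_scaled[OF k j pos(2,3)])
  have HJ: "H w \<le> J w" for w
    unfolding H_def J_def JP_def by (rule finite_measure_mono) auto
  have EH: "\<forall>\<^sub>F w in F2. E w \<le> H w"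
    using eventually_F2_pos
  proof eventually_elim
    case (elim w)
    note wpos = elim
    show ?case unfolding E_def H_def
    proof (rule finite_measure_mono_AE)
      show "AE \<omega> in M. \<omega> \<in> {\<omega> \<in> space M. \<Theta> k \<omega> * X k \<omega> > b * fst w \<and>
            \<Delta> j \<omega> * Y j \<omega> > c * snd w \<and> \<bar>\<Delta> l \<omega> * Y l \<omega>\<bar> > a * snd w} \<longrightarrow>
          \<omega> \<in> {\<omega> \<in> space M. \<bar>Y l \<omega>\<bar> > a' * snd w \<and> X k \<omega> > b' * fst w \<and> Y j \<omega> > c' * snd w}"
        using AE_good
      proof eventually_elim
        case (elim \<omega>)
        have g: "0 \<le> \<Delta> l \<omega>" "\<Delta> l \<omega> \<le> Bd" "0 \<le> \<Theta> k \<omega>" "\<Theta> k \<omega> \<le> Bd" "0 \<le> \<Delta> j \<omega>" "\<Delta> j \<omega> \<le> Bd"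
          using elim l k j unfolding good_def by auto
        show ?case
        proof (intro impI)
          assume "\<omega> \<in> {\<omega> \<in> space M. \<Theta> k \<omega> * X k \<omega> > b * fst w \<and>
            \<Delta> j \<omega> * Y j \<omega> > c * snd w \<and> \<bar>\<Delta> l \<omega> * Y l \<omega>\<bar> > a * snd w}"
          hence h: "\<omega> \<in> space M" "\<Delta> l \<omega> * \<bar>Y l \<omega>\<bar> > a * snd w" "\<Theta> k \<omega> * X k \<omega> > b * fst w"
            "\<Delta> j \<omega> * Y j \<omega> > c * snd w" using g by (auto simp: abs_mult)
          have "\<bar>Y l \<omega>\<bar> > a * snd w / Bd" by (rule scale_lemma[OF g(1,2) Bd_pos _ h(2)]) (use a wpos in auto)
          moreover have "X k \<omega> > b * fst w / Bd" by (rule scale_lemma[OF g(3,4) Bd_pos _ h(3)]) (use b wpos in auto)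
          moreover have "Y j \<omega> > c * snd w / Bd" by (rule scale_lemma[OF g(5,6) Bd_pos _ h(4)]) (use c wpos in auto)
          ultimately show "\<omega> \<in> {\<omega> \<in> space M. \<bar>Y l \<omega>\<bar> > a' * snd w \<and> X k \<omega> > b' * fst w \<and> Y j \<omega> > c' * snd w}"
            using h(1) unfolding a'_b'_c'_def by simp
        qed
      qed
    qed measurable
  qed
  have "((\<lambda>w. E w / (FF k (fst w) * GG j (snd w))) \<longlongrightarrow> 0) F2"
    by (rule squeeze_bad[OF _ EH _ HJ limHJ limJ]) (auto simp: E_def H_def F_pos[OF k] G_pos[OF j])
  thus "((\<lambda>w. measure M {\<omega> \<in> space M. \<Theta> k \<omega> * X k \<omega> > b * fst w \<and>
            \<Delta> j \<omega> * Y j \<omega> > c * snd w \<and> \<bar>\<Delta> l \<omega> * Y l \<omega>\<bar> > a * snd w} / (FF k (fst w) * GG j (snd w))) \<longlongrightarrow> 0) F2"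
    unfolding E_def .
next
  assume W0: "W k j = 0"
  show "\<forall>\<^sub>F w in F2. measure M {\<omega> \<in> space M. \<Theta> k \<omega> * X k \<omega> > b * fst w \<and>
            \<Delta> j \<omega> * Y j \<omega> > c * snd w \<and> \<bar>\<Delta> l \<omega> * Y l \<omega>\<bar> > a * snd w} = 0"
    using eventually_F2_pos
  proof eventually_elim
    case (elim w)
    have "b * fst w > 0" "c * snd w > 0" using elim b c by auto
    thus ?case by (intro null_event[OF k j W0]) auto
  qed
qed

end



lemma pigeon:
  fixes f :: "nat \<Rightarrow> real"
  assumes "finite I" "I \<noteq> {}" "(\<Sum>i\<in>I. f i) > x"
  shows "\<exists>i\<in>I. f i > x / real (card I)"
proof (rule ccontr)
  assume "\<not> ?thesis"
  hence "\<And>i. i \<in> I \<Longrightarrow> f i \<le> x / real (card I)" by auto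
  hence "(\<Sum>i\<in>I. f i) \<le> x" by (rule sum_bounded_above_divide) (use assms in auto)
  with assms show False by simp
qed

lemma rest_bound:
  fixes f :: "nat \<Rightarrow> real"
  assumes n: "n \<ge> 1" and k: "k \<in> {1..n}" and e: "e \<ge> 0" and x: "x > 0"
    and le: "\<And>i. i \<in> {1..n} - {k} \<Longrightarrow> f i \<le> e / real n * x"
  shows "(\<Sum>i\<in>{1..n} - {k}. f i) \<le> e * x"
proof -
  have c: "card ({1..n} - {k}) = n - 1" using k by simp
  have "(\<Sum>i\<in>{1..n} - {k}. f i) \<le> real (card ({1..n} - {k})) * (e / real n * x)"
    by (rule sum_bounded_above) (use le in auto)
  also have "\<dots> \<le> real n * (e / real n * x)"
    using c e x by (intro mult_right_mono) auto
  also have "\<dots> = e * x" using n by simp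
  finally show ?thesis .
qed

lemma rest_bound_below:
  fixes f :: "nat \<Rightarrow> real"
  assumes n: "n \<ge> 1" and k: "k \<in> {1..n}" and e: "e \<ge> 0" and x: "x > 0"
    and le: "\<And>i. i \<in> {1..n} - {k} \<Longrightarrow> \<bar>f i\<bar> \<le> e / real n * x"
  shows "(\<Sum>i\<in>{1..n} - {k}. f i) \<ge> - (e * x)"
proof -
  have "(\<Sum>i\<in>{1..n} - {k}. - f i) \<le> e * x"
    by (rule rest_bound[OF n k e x]) (use le in force)
  thus ?thesis by (simp add: sum_negf)
qed

context cor_setup begin

definition SS where "SS \<omega> = (\<Sum>i=1..n. \<Theta> i \<omega> * X i \<omega>)"
definition TT where "TT \<omega> = (\<Sum>j=1..m. \<Delta> j \<omega> * Y j \<omega>)"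

lemma SS_meas[measurable]: "SS \<in> borel_measurable M"
  unfolding SS_def by (intro borel_measurable_sum borel_measurable_times meas_Th meas_X) auto
lemma TT_meas[measurable]: "TT \<in> borel_measurable M"
  unfolding TT_def by (intro borel_measurable_sum borel_measurable_times meas_De meas_Y) auto

definition DD where "DD w = measure M {\<omega> \<in> space M. SS \<omega> > fst w \<and> TT \<omega> > snd w}"

definition PMs where "PMs q p w = {\<omega> \<in> space M. \<Theta> (fst p) \<omega> * X (fst p) \<omega> > q * fst w \<and> \<Delta> (snd p) \<omega> * Y (snd p) \<omega> > q * snd w}"
definition BXs where "BXs a b c p i w = {\<omega> \<in> space M. \<bar>\<Theta> i \<omega> * X i \<omega>\<bar> > a * fst w \<and>
            \<Theta> (fst p) \<omega> * X (fst p) \<omega> > b * fst w \<and> \<Delta> (snd p) \<omega> * Y (snd p) \<omega> > c * snd w}"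
definition BYs where "BYs a b c p l w = {\<omega> \<in> space M. \<Theta> (fst p) \<omega> * X (fst p) \<omega> > b * fst w \<and>
            \<Delta> (snd p) \<omega> * Y (snd p) \<omega> > c * snd w \<and> \<bar>\<Delta> l \<omega> * Y l \<omega>\<bar> > a * snd w}"

abbreviation K1 where "K1 \<equiv> {1..n} \<times> {1..m}"

lemma PMs_sets: assumes p: "p \<in> K1" shows "PMs q p w \<in> sets M"
proof -
  have a: "fst p \<in> {1..n}" "snd p \<in> {1..m}" using p by auto
  note [measurable] = meas_X[OF a(1)] meas_Th[OF a(1)] meas_Y[OF a(2)] meas_De[OF a(2)]
  show ?thesis unfolding PMs_def by measurable
qed

lemma BXs_sets: assumes p: "p \<in> K1" and i: "i \<in> {1..n}" shows "BXs a b c p i w \<in> sets M"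
proof -
  have a: "fst p \<in> {1..n}" "snd p \<in> {1..m}" using p by auto
  note [measurable] = meas_X[OF a(1)] meas_Th[OF a(1)] meas_Y[OF a(2)] meas_De[OF a(2)] meas_X[OF i] meas_Th[OF i]
  show ?thesis unfolding BXs_def by measurable
qed

lemma BYs_sets: assumes p: "p \<in> K1" and l: "l \<in> {1..m}" shows "BYs a b c p l w \<in> sets M"
proof -
  have a: "fst p \<in> {1..n}" "snd p \<in> {1..m}" using p by auto
  note [measurable] = meas_X[OF a(1)] meas_Th[OF a(1)] meas_Y[OF a(2)] meas_De[OF a(2)] meas_Y[OF l] meas_De[OF l]
  show ?thesis unfolding BYs_def by measurable
qed

lemma D_sets: "{\<omega> \<in> space M. SS \<omega> > fst w \<and> TT \<omega> > snd w} \<in> sets M" by measurable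

end



context cor_setup begin

lemma upper:
  assumes e: "0 < e" "e < 1" and w: "fst w > 0" "snd w > 0"
  shows "DD w \<le> (\<Sum>p\<in>K1. measure M (PMs (1 - e) p w))
     + (\<Sum>p\<in>K1. \<Sum>i\<in>{1..n} - {fst p}. measure M (BXs (e / real n) (e / real n) (1 / real m) p i w))
     + (\<Sum>p\<in>K1. \<Sum>l\<in>{1..m} - {snd p}. measure M (BYs (e / real m) (1 / real n) (e / real m) p l w))"
proof -
  let ?D = "{\<omega> \<in> space M. SS \<omega> > fst w \<and> TT \<omega> > snd w}"
  let ?U1 = "\<Union>p\<in>K1. PMs (1 - e) p w"
  let ?V2 = "\<lambda>p. \<Union>i\<in>{1..n} - {fst p}. BXs (e / real n) (e / real n) (1 / real m) p i w"
  let ?V3 = "\<lambda>p. \<Union>l\<in>{1..m} - {snd p}. BYs (e / real m) (1 / real n) (e / real m) p l w"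
  let ?U2 = "\<Union>p\<in>K1. ?V2 p"
  let ?U3 = "\<Union>p\<in>K1. ?V3 p"
  have sV2: "?V2 p \<in> sets M" if "p \<in> K1" for p using that by (intro sets.finite_UN) (auto intro: BXs_sets)
  have sV3: "?V3 p \<in> sets M" if "p \<in> K1" for p using that by (intro sets.finite_UN) (auto intro: BYs_sets)
  have s1: "?U1 \<in> sets M" by (intro sets.finite_UN) (auto intro: PMs_sets)
  have s2: "?U2 \<in> sets M" by (intro sets.finite_UN sV2) auto
  have s3: "?U3 \<in> sets M" by (intro sets.finite_UN sV3) auto
  have sub: "?D \<subseteq> ?U1 \<union> ?U2 \<union> ?U3"
  proof
    fix \<omega> assume "\<omega> \<in> ?D"
    hence om: "\<omega> \<in> space M" "SS \<omega> > fst w" "TT \<omega> > snd w" by auto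
    obtain k where k: "k \<in> {1..n}" "\<Theta> k \<omega> * X k \<omega> > fst w / real n"
      using pigeon[where I="{1..n}" and f="\<lambda>i. \<Theta> i \<omega> * X i \<omega>" and x="fst w"] om nm unfolding SS_def by auto
    obtain j where j: "j \<in> {1..m}" "\<Delta> j \<omega> * Y j \<omega> > snd w / real m"
      using pigeon[where I="{1..m}" and f="\<lambda>i. \<Delta> i \<omega> * Y i \<omega>" and x="snd w"] om nm unfolding TT_def by auto
    have le1: "e / real n * fst w \<le> fst w / real n"
      using e w nm by (simp add: divide_right_mono mult_left_le_one_le)
    have le2: "e / real m * snd w \<le> snd w / real m"
      using e w nm by (simp add: divide_right_mono mult_left_le_one_le)
    have kx: "\<Theta> k \<omega> * X k \<omega> > e / real n * fst w" using k le1 by linarith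
    have jy: "\<Delta> j \<omega> * Y j \<omega> > e / real m * snd w" using j le2 by linarith
    have kj: "(k, j) \<in> K1" using k j by auto
    show "\<omega> \<in> ?U1 \<union> ?U2 \<union> ?U3"
    proof (cases "\<exists>i\<in>{1..n} - {k}. \<Theta> i \<omega> * X i \<omega> > e / real n * fst w")
      case True
      then obtain i where i: "i \<in> {1..n} - {k}" "\<Theta> i \<omega> * X i \<omega> > e / real n * fst w" by blast
      have "\<omega> \<in> BXs (e / real n) (e / real n) (1 / real m) (k, j) i w"
        unfolding BXs_def using om i kx j by auto
      hence "\<omega> \<in> ?V2 (k, j)" using i by auto
      thus ?thesis using kj by blast
    next
      case False
      hence "(\<Sum>i\<in>{1..n} - {k}. \<Theta> i \<omega> * X i \<omega>) \<le> e * fst w"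
        by (intro rest_bound[OF nm(1) k(1)]) (use e w in \<open>auto simp: not_less\<close>)
      moreover have "SS \<omega> = \<Theta> k \<omega> * X k \<omega> + (\<Sum>i\<in>{1..n} - {k}. \<Theta> i \<omega> * X i \<omega>)"
        unfolding SS_def by (rule sum.remove) (use k in auto)
      ultimately have kX: "\<Theta> k \<omega> * X k \<omega> > (1 - e) * fst w" using om by (simp add: algebra_simps)
      show ?thesis
      proof (cases "\<exists>l\<in>{1..m} - {j}. \<Delta> l \<omega> * Y l \<omega> > e / real m * snd w")
        case True
        then obtain l where l: "l \<in> {1..m} - {j}" "\<Delta> l \<omega> * Y l \<omega> > e / real m * snd w" by blast
        have "\<omega> \<in> BYs (e / real m) (1 / real n) (e / real m) (k, j) l w"
          unfolding BYs_def using om l k jy by auto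
        hence "\<omega> \<in> ?V3 (k, j)" using l by auto
        thus ?thesis using kj by blast
      next
        case False
        hence "(\<Sum>l\<in>{1..m} - {j}. \<Delta> l \<omega> * Y l \<omega>) \<le> e * snd w"
          by (intro rest_bound[OF nm(2) j(1)]) (use e w in \<open>auto simp: not_less\<close>)
        moreover have "TT \<omega> = \<Delta> j \<omega> * Y j \<omega> + (\<Sum>l\<in>{1..m} - {j}. \<Delta> l \<omega> * Y l \<omega>)"
          unfolding TT_def by (rule sum.remove) (use j in auto)
        ultimately have jY: "\<Delta> j \<omega> * Y j \<omega> > (1 - e) * snd w" using om by (simp add: algebra_simps)
        have "\<omega> \<in> PMs (1 - e) (k, j) w" unfolding PMs_def using om kX jY by auto
        thus ?thesis using kj by blast
      qed
    qed
  qed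
  have "DD w \<le> measure M (?U1 \<union> ?U2 \<union> ?U3)"
    unfolding DD_def by (rule finite_measure_mono[OF sub]) (use s1 s2 s3 in auto)
  also have "\<dots> \<le> measure M (?U1 \<union> ?U2) + measure M ?U3"
    by (rule measure_Un_le) (use s1 s2 s3 in auto)
  also have "\<dots> \<le> measure M ?U1 + measure M ?U2 + measure M ?U3"
    using measure_Un_le[OF s1 s2] by simp
  also have "measure M ?U1 \<le> (\<Sum>p\<in>K1. measure M (PMs (1 - e) p w))"
    by (rule measure_UNION_le) (auto intro: PMs_sets)
  also have "measure M ?U2 \<le> (\<Sum>p\<in>K1. \<Sum>i\<in>{1..n} - {fst p}. measure M (BXs (e / real n) (e / real n) (1 / real m) p i w))"
  proof -
    have "measure M ?U2 \<le> (\<Sum>p\<in>K1. measure M (?V2 p))" apply (rule measure_UNION_le) apply simp by (rule sV2)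
    also have "\<dots> \<le> (\<Sum>p\<in>K1. \<Sum>i\<in>{1..n} - {fst p}. measure M (BXs (e / real n) (e / real n) (1 / real m) p i w))"
      by (intro sum_mono measure_UNION_le) (auto intro: BXs_sets)
    finally show ?thesis .
  qed
  also have "measure M ?U3 \<le> (\<Sum>p\<in>K1. \<Sum>l\<in>{1..m} - {snd p}. measure M (BYs (e / real m) (1 / real n) (e / real m) p l w))"
  proof -
    have "measure M ?U3 \<le> (\<Sum>p\<in>K1. measure M (?V3 p))" apply (rule measure_UNION_le) apply simp by (rule sV3)
    also have "\<dots> \<le> (\<Sum>p\<in>K1. \<Sum>l\<in>{1..m} - {snd p}. measure M (BYs (e / real m) (1 / real n) (e / real m) p l w))"
      by (intro sum_mono measure_UNION_le) (auto intro: BYs_sets)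
    finally show ?thesis .
  qed
  finally show ?thesis by simp
qed

end



context cor_setup begin

lemma lower:
  assumes e: "0 < e" and w: "fst w > 0" "snd w > 0"
  shows "(\<Sum>p\<in>K1. measure M (PMs (1 + e) p w))
     - (\<Sum>p\<in>K1. \<Sum>i\<in>{1..n} - {fst p}. measure M (BXs (e / real n) (1 + e) (1 + e) p i w))
     - (\<Sum>p\<in>K1. \<Sum>l\<in>{1..m} - {snd p}. measure M (BYs (e / real m) (1 + e) (1 + e) p l w)) \<le> DD w"
proof -
  define V2 where "V2 p = (\<Union>i\<in>{1..n} - {fst p}. BXs (e / real n) (1 + e) (1 + e) p i w)" for p
  define V3 where "V3 p = (\<Union>l\<in>{1..m} - {snd p}. BYs (e / real m) (1 + e) (1 + e) p l w)" for p
  define E where "E p = PMs (1 + e) p w - V2 p - V3 p" for p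
  have sV2: "V2 p \<in> sets M" if "p \<in> K1" for p unfolding V2_def using that by (intro sets.finite_UN) (auto intro: BXs_sets)
  have sV3: "V3 p \<in> sets M" if "p \<in> K1" for p unfolding V3_def using that by (intro sets.finite_UN) (auto intro: BYs_sets)
  have sE: "E p \<in> sets M" if "p \<in> K1" for p unfolding E_def using that sV2 sV3 PMs_sets by auto
  have memE: "\<omega> \<in> space M \<and> \<Theta> (fst p) \<omega> * X (fst p) \<omega> > (1 + e) * fst w \<and> \<Delta> (snd p) \<omega> * Y (snd p) \<omega> > (1 + e) * snd w
      \<and> (\<forall>i\<in>{1..n} - {fst p}. \<bar>\<Theta> i \<omega> * X i \<omega>\<bar> \<le> e / real n * fst w)
      \<and> (\<forall>l\<in>{1..m} - {snd p}. \<bar>\<Delta> l \<omega> * Y l \<omega>\<bar> \<le> e / real m * snd w)"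
    if "\<omega> \<in> E p" for \<omega> p
    using that unfolding E_def V2_def V3_def PMs_def BXs_def BYs_def by (auto simp: not_less)
  have lt1: "e / real n * fst w < (1 + e) * fst w"
  proof -
    have "e / real n \<le> e" using e nm by (simp add: divide_le_eq mult_le_cancel_left1 ) 
    thus ?thesis using e w by (intro mult_strict_right_mono) auto
  qed
  have lt2: "e / real m * snd w < (1 + e) * snd w"
  proof -
    have "e / real m \<le> e" using e nm by (simp add: divide_le_eq mult_le_cancel_left1)
    thus ?thesis using e w by (intro mult_strict_right_mono) auto
  qed
  have EsubD: "E p \<subseteq> {\<omega> \<in> space M. SS \<omega> > fst w \<and> TT \<omega> > snd w}" if p: "p \<in> K1" for p
  proof
    fix \<omega> assume "\<omega> \<in> E p"
    note h = memE[OF this]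
    have k: "fst p \<in> {1..n}" and j: "snd p \<in> {1..m}" using p by auto
    have r1: "(\<Sum>i\<in>{1..n} - {fst p}. \<Theta> i \<omega> * X i \<omega>) \<ge> - (e * fst w)"
      by (rule rest_bound_below[OF nm(1) k]) (use h e w in auto)
    have r2: "(\<Sum>l\<in>{1..m} - {snd p}. \<Delta> l \<omega> * Y l \<omega>) \<ge> - (e * snd w)"
      by (rule rest_bound_below[OF nm(2) j]) (use h e w in auto)
    have "SS \<omega> = \<Theta> (fst p) \<omega> * X (fst p) \<omega> + (\<Sum>i\<in>{1..n} - {fst p}. \<Theta> i \<omega> * X i \<omega>)"
      unfolding SS_def by (rule sum.remove) (use k in auto)
    moreover have "TT \<omega> = \<Delta> (snd p) \<omega> * Y (snd p) \<omega> + (\<Sum>l\<in>{1..m} - {snd p}. \<Delta> l \<omega> * Y l \<omega>)"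
      unfolding TT_def by (rule sum.remove) (use j in auto)
    ultimately show "\<omega> \<in> {\<omega> \<in> space M. SS \<omega> > fst w \<and> TT \<omega> > snd w}"
      using h r1 r2 by (auto simp: algebra_simps)
  qed
  have disj: "disjoint_family_on E K1"
    unfolding disjoint_family_on_def
  proof (intro ballI impI)
    fix p q assume p: "p \<in> K1" and q: "q \<in> K1" and pq: "p \<noteq> q"
    show "E p \<inter> E q = {}"
    proof (rule ccontr)
      assume "E p \<inter> E q \<noteq> {}"
      then obtain \<omega> where "\<omega> \<in> E p" "\<omega> \<in> E q" by blast
      note hp = memE[OF this(1)] and hq = memE[OF this(2)]
      show False
      proof (cases "fst p = fst q")
        case False
        hence "fst q \<in> {1..n} - {fst p}" using q by auto
        hence "\<bar>\<Theta> (fst q) \<omega> * X (fst q) \<omega>\<bar> \<le> e / real n * fst w" using hp by blast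
        thus False using hq lt1 by linarith
      next
        case True
        hence "snd p \<noteq> snd q" using pq by (auto simp: prod_eq_iff)
        hence "snd q \<in> {1..m} - {snd p}" using q by auto
        hence "\<bar>\<Delta> (snd q) \<omega> * Y (snd q) \<omega>\<bar> \<le> e / real m * snd w" using hp by blast
        thus False using hq lt2 by linarith
      qed
    qed
  qed
  have "(\<Sum>p\<in>K1. measure M (E p)) = measure M (\<Union>p\<in>K1. E p)"
    by (rule finite_measure_finite_Union[symmetric]) (use sE disj in auto)
  also have "\<dots> \<le> DD w" unfolding DD_def
    by (rule finite_measure_mono) (use EsubD D_sets in auto)
  finally have sumE: "(\<Sum>p\<in>K1. measure M (E p)) \<le> DD w" .
  have each: "measure M (PMs (1 + e) p w) \<le> measure M (E p)
      + (\<Sum>i\<in>{1..n} - {fst p}. measure M (BXs (e / real n) (1 + e) (1 + e) p i w))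
      + (\<Sum>l\<in>{1..m} - {snd p}. measure M (BYs (e / real m) (1 + e) (1 + e) p l w))" if p: "p \<in> K1" for p
  proof -
    have "PMs (1 + e) p w \<subseteq> (E p \<union> V2 p) \<union> V3 p" unfolding E_def by auto
    hence "measure M (PMs (1 + e) p w) \<le> measure M ((E p \<union> V2 p) \<union> V3 p)"
      by (rule finite_measure_mono) (use sE sV2 sV3 p in auto)
    also have "\<dots> \<le> measure M (E p \<union> V2 p) + measure M (V3 p)"
      by (rule measure_Un_le) (use sE sV2 sV3 p in auto)
    also have "\<dots> \<le> measure M (E p) + measure M (V2 p) + measure M (V3 p)"
      using measure_Un_le[OF sE[OF p] sV2[OF p]] by simp
    also have "measure M (V2 p) \<le> (\<Sum>i\<in>{1..n} - {fst p}. measure M (BXs (e / real n) (1 + e) (1 + e) p i w))"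
      unfolding V2_def by (rule measure_UNION_le) (use p in \<open>auto intro: BXs_sets\<close>)
    also have "measure M (V3 p) \<le> (\<Sum>l\<in>{1..m} - {snd p}. measure M (BYs (e / real m) (1 + e) (1 + e) p l w))"
      unfolding V3_def by (rule measure_UNION_le) (use p in \<open>auto intro: BYs_sets\<close>)
    finally show ?thesis by simp
  qed
  have "(\<Sum>p\<in>K1. measure M (PMs (1 + e) p w)) \<le> (\<Sum>p\<in>K1. measure M (E p)
      + (\<Sum>i\<in>{1..n} - {fst p}. measure M (BXs (e / real n) (1 + e) (1 + e) p i w))
      + (\<Sum>l\<in>{1..m} - {snd p}. measure M (BYs (e / real m) (1 + e) (1 + e) p l w)))"
    by (rule sum_mono) (rule each)
  also have "\<dots> = (\<Sum>p\<in>K1. measure M (E p))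
      + (\<Sum>p\<in>K1. \<Sum>i\<in>{1..n} - {fst p}. measure M (BXs (e / real n) (1 + e) (1 + e) p i w))
      + (\<Sum>p\<in>K1. \<Sum>l\<in>{1..m} - {snd p}. measure M (BYs (e / real m) (1 + e) (1 + e) p l w))"
    by (simp add: sum.distrib)
  finally show ?thesis using sumE by linarith
qed

end



context cor_setup begin

lemma ok_add:
  assumes "okkj k j E1" "okkj k j E2"
  shows "okkj k j (\<lambda>w. E1 w + E2 w)"
  using assms unfolding okkj_def
proof (intro conjI impI)
  assume a: "((\<lambda>w. E1 w / (FF k (fst w) * GG j (snd w))) \<longlongrightarrow> 0) F2 \<and> (W k j = 0 \<longrightarrow> eventually (\<lambda>w. E1 w = 0) F2)"
     and b: "((\<lambda>w. E2 w / (FF k (fst w) * GG j (snd w))) \<longlongrightarrow> 0) F2 \<and> (W k j = 0 \<longrightarrow> eventually (\<lambda>w. E2 w = 0) F2)"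
  have "((\<lambda>w. E1 w / (FF k (fst w) * GG j (snd w)) + E2 w / (FF k (fst w) * GG j (snd w))) \<longlongrightarrow> 0 + 0) F2"
    using a b by (intro tendsto_add) auto
  thus "((\<lambda>w. (E1 w + E2 w) / (FF k (fst w) * GG j (snd w))) \<longlongrightarrow> 0) F2" by (simp add: add_divide_distrib)
  {
    assume "W k j = 0"
    hence "eventually (\<lambda>w. E1 w = 0) F2" "eventually (\<lambda>w. E2 w = 0) F2" using a b by auto
    thus "eventually (\<lambda>w. E1 w + E2 w = 0) F2" by eventually_elim simp
  }
qed

lemma ok_neg:
  assumes "okkj k j E"
  shows "okkj k j (\<lambda>w. - E w)"
  using assms unfolding okkj_def
proof (intro conjI impI)
  assume a: "((\<lambda>w. E w / (FF k (fst w) * GG j (snd w))) \<longlongrightarrow> 0) F2 \<and> (W k j = 0 \<longrightarrow> eventually (\<lambda>w. E w = 0) F2)"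
  have "((\<lambda>w. - (E w / (FF k (fst w) * GG j (snd w)))) \<longlongrightarrow> - 0) F2"
    using a by (intro tendsto_minus) auto
  thus "((\<lambda>w. - E w / (FF k (fst w) * GG j (snd w))) \<longlongrightarrow> 0) F2" by simp
  {
    assume "W k j = 0"
    hence "eventually (\<lambda>w. E w = 0) F2" using a by auto
    thus "eventually (\<lambda>w. - E w = 0) F2" by eventually_elim simp
  }
qed

lemma ok_zero: "okkj k j (\<lambda>w. 0)" unfolding okkj_def by simp

lemma ok_sum:
  assumes "finite I" "\<And>i. i \<in> I \<Longrightarrow> okkj k j (E i)"
  shows "okkj k j (\<lambda>w. \<Sum>i\<in>I. E i w)"
  using assms
proof (induction I rule: finite_induct)
  case empty thus ?case by (simp add: ok_zero)
next
  case (insert x F)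
  have "okkj k j (\<lambda>w. E x w + (\<Sum>i\<in>F. E i w))"
    by (rule ok_add) (use insert in auto)
  thus ?case using insert by simp
qed

lemma negl_sum:
  assumes "\<And>p. p \<in> K1 \<Longrightarrow> okkj (fst p) (snd p) (G p)"
  shows "((\<lambda>w. (\<Sum>p\<in>K1. G p w) / R w) \<longlongrightarrow> 0) F2"
proof -
  have "((\<lambda>w. \<Sum>p\<in>K1. G p w / R w) \<longlongrightarrow> 0) F2"
    by (rule tendsto_null_sum) (use assms in \<open>auto intro: ok_negl\<close>)
  thus ?thesis by (simp add: sum_divide_distrib)
qed

lemma zero_sum:
  assumes "\<And>p. p \<in> K1 \<Longrightarrow> okkj (fst p) (snd p) (G p)" and "\<And>p. p \<in> K1 \<Longrightarrow> W (fst p) (snd p) = 0"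
  shows "eventually (\<lambda>w. (\<Sum>p\<in>K1. G p w) = 0) F2"
proof -
  have "eventually (\<lambda>w. \<forall>p\<in>K1. G p w = 0) F2"
    by (rule eventually_ball_finite) (use assms in \<open>auto simp: okkj_def\<close>)
  thus ?thesis by eventually_elim (auto intro!: sum.neutral)
qed

definition Asum where "Asum = (\<Sum>i=1..n. \<alpha> i) + (\<Sum>j=1..m. \<alpha>' j)"

lemma alpha_le_A: assumes "p \<in> K1" shows "\<alpha> (fst p) + \<alpha>' (snd p) \<le> Asum"
proof -
  have "\<alpha> (fst p) \<le> (\<Sum>i=1..n. \<alpha> i)" by (rule member_le_sum) (use assms alpha in auto)
  moreover have "\<alpha>' (snd p) \<le> (\<Sum>j=1..m. \<alpha>' j)" by (rule member_le_sum) (use assms alpha' in auto)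
  ultimately show ?thesis unfolding Asum_def by simp
qed

definition Gup where "Gup e p w =
   (measure M (PMs (1 - e) p w) - W (fst p) (snd p) * (1 - e) powr (- \<alpha> (fst p)) * (1 - e) powr (- \<alpha>' (snd p))
        * FF (fst p) (fst w) * GG (snd p) (snd w))
   + (\<Sum>i\<in>{1..n} - {fst p}. measure M (BXs (e / real n) (e / real n) (1 / real m) p i w))
   + (\<Sum>l\<in>{1..m} - {snd p}. measure M (BYs (e / real m) (1 / real n) (e / real m) p l w))"

definition Glow where "Glow e p w =
   (measure M (PMs (1 + e) p w) - W (fst p) (snd p) * (1 + e) powr (- \<alpha> (fst p)) * (1 + e) powr (- \<alpha>' (snd p))
        * FF (fst p) (fst w) * GG (snd p) (snd w))
   - (\<Sum>i\<in>{1..n} - {fst p}. measure M (BXs (e / real n) (1 + e) (1 + e) p i w))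
   - (\<Sum>l\<in>{1..m} - {snd p}. measure M (BYs (e / real m) (1 + e) (1 + e) p l w))"

lemma Gup_ok: assumes e: "0 < e" "e < 1" and p: "p \<in> K1" shows "okkj (fst p) (snd p) (Gup e p)"
proof -
  have k: "fst p \<in> {1..n}" and j: "snd p \<in> {1..m}" using p by auto
  have n0: "real n > 0" "real m > 0" using nm by auto
  have 1: "okkj (fst p) (snd p) (\<lambda>w. measure M (PMs (1 - e) p w) - W (fst p) (snd p) * (1 - e) powr (- \<alpha> (fst p)) * (1 - e) powr (- \<alpha>' (snd p))
        * FF (fst p) (fst w) * GG (snd p) (snd w))"
    unfolding PMs_def by (rule main_ok[OF k j]) (use e in auto)
  have 2: "okkj (fst p) (snd p) (\<lambda>w. \<Sum>i\<in>{1..n} - {fst p}. measure M (BXs (e / real n) (e / real n) (1 / real m) p i w))"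
    unfolding BXs_def apply (rule ok_sum) apply simp apply (rule badX_ok) using k j e n0 by auto
  have 3: "okkj (fst p) (snd p) (\<lambda>w. \<Sum>l\<in>{1..m} - {snd p}. measure M (BYs (e / real m) (1 / real n) (e / real m) p l w))"
    unfolding BYs_def apply (rule ok_sum) apply simp apply (rule badY_ok) using k j e n0 by auto
  show ?thesis unfolding Gup_def[abs_def] by (intro ok_add 1 2 3)
qed

lemma Glow_ok: assumes e: "0 < e" and p: "p \<in> K1" shows "okkj (fst p) (snd p) (Glow e p)"
proof -
  have k: "fst p \<in> {1..n}" and j: "snd p \<in> {1..m}" using p by auto
  have n0: "real n > 0" "real m > 0" using nm by auto
  have 1: "okkj (fst p) (snd p) (\<lambda>w. measure M (PMs (1 + e) p w) - W (fst p) (snd p) * (1 + e) powr (- \<alpha> (fst p)) * (1 + e) powr (- \<alpha>' (snd p))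
        * FF (fst p) (fst w) * GG (snd p) (snd w))"
    unfolding PMs_def by (rule main_ok[OF k j]) (use e in auto)
  have 2: "okkj (fst p) (snd p) (\<lambda>w. - (\<Sum>i\<in>{1..n} - {fst p}. measure M (BXs (e / real n) (1 + e) (1 + e) p i w)))"
    unfolding BXs_def apply (intro ok_neg ok_sum) apply simp apply (rule badX_ok) using k j e n0 by auto
  have 3: "okkj (fst p) (snd p) (\<lambda>w. - (\<Sum>l\<in>{1..m} - {snd p}. measure M (BYs (e / real m) (1 + e) (1 + e) p l w)))"
    unfolding BYs_def apply (intro ok_neg ok_sum) apply simp apply (rule badY_ok) using k j e n0 by auto
  have "okkj (fst p) (snd p) (\<lambda>w. ((measure M (PMs (1 + e) p w) - W (fst p) (snd p) * (1 + e) powr (- \<alpha> (fst p)) * (1 + e) powr (- \<alpha>' (snd p))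
        * FF (fst p) (fst w) * GG (snd p) (snd w)) + - (\<Sum>i\<in>{1..n} - {fst p}. measure M (BXs (e / real n) (1 + e) (1 + e) p i w)))
        + - (\<Sum>l\<in>{1..m} - {snd p}. measure M (BYs (e / real m) (1 + e) (1 + e) p l w)))"
    by (intro ok_add 1 2 3)
  thus ?thesis unfolding Glow_def[abs_def] by simp
qed

end



context cor_setup begin

lemma upper_R:
  assumes e: "0 < e" "e < 1" and w: "fst w > 0" "snd w > 0"
  shows "DD w \<le> (1 - e) powr (- Asum) * R w + (\<Sum>p\<in>K1. Gup e p w)"
proof -
  let ?T = "\<lambda>p. W (fst p) (snd p) * (1 - e) powr (- \<alpha> (fst p)) * (1 - e) powr (- \<alpha>' (snd p)) * FF (fst p) (fst w) * GG (snd p) (snd w)"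
  have decomp: "(\<Sum>p\<in>K1. measure M (PMs (1 - e) p w))
     + (\<Sum>p\<in>K1. \<Sum>i\<in>{1..n} - {fst p}. measure M (BXs (e / real n) (e / real n) (1 / real m) p i w))
     + (\<Sum>p\<in>K1. \<Sum>l\<in>{1..m} - {snd p}. measure M (BYs (e / real m) (1 / real n) (e / real m) p l w))
     = (\<Sum>p\<in>K1. ?T p) + (\<Sum>p\<in>K1. Gup e p w)"
    unfolding Gup_def by (simp add: sum.distrib sum_subtractf)
  have "(\<Sum>p\<in>K1. ?T p) \<le> (\<Sum>p\<in>K1. (1 - e) powr (- Asum) * (W (fst p) (snd p) * FF (fst p) (fst w) * GG (snd p) (snd w)))"
  proof (rule sum_mono)
    fix p assume p: "p \<in> K1"
    have nn: "0 \<le> W (fst p) (snd p) * FF (fst p) (fst w) * GG (snd p) (snd w)"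
      using p by (auto intro!: mult_nonneg_nonneg W_nonneg)
    have "(1 - e) powr (- \<alpha> (fst p)) * (1 - e) powr (- \<alpha>' (snd p)) = (1 - e) powr (- (\<alpha> (fst p) + \<alpha>' (snd p)))"
      by (simp add: powr_add[symmetric])
    also have "\<dots> \<le> (1 - e) powr (- Asum)"
      by (rule powr_mono') (use alpha_le_A[OF p] e in auto)
    finally have "(1 - e) powr (- \<alpha> (fst p)) * (1 - e) powr (- \<alpha>' (snd p)) \<le> (1 - e) powr (- Asum)" .
    hence "((1 - e) powr (- \<alpha> (fst p)) * (1 - e) powr (- \<alpha>' (snd p))) * (W (fst p) (snd p) * FF (fst p) (fst w) * GG (snd p) (snd w))
        \<le> (1 - e) powr (- Asum) * (W (fst p) (snd p) * FF (fst p) (fst w) * GG (snd p) (snd w))"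
      by (rule mult_right_mono[OF _ nn])
    thus "?T p \<le> (1 - e) powr (- Asum) * (W (fst p) (snd p) * FF (fst p) (fst w) * GG (snd p) (snd w))"
      by (simp add: algebra_simps)
  qed
  also have "\<dots> = (1 - e) powr (- Asum) * R w" unfolding R_def by (simp add: sum_distrib_left)
  finally have "(\<Sum>p\<in>K1. ?T p) \<le> (1 - e) powr (- Asum) * R w" .
  with upper[OF e w] decomp show ?thesis by linarith
qed

lemma lower_R:
  assumes e: "0 < e" and w: "fst w > 0" "snd w > 0"
  shows "(1 + e) powr (- Asum) * R w + (\<Sum>p\<in>K1. Glow e p w) \<le> DD w"
proof -
  let ?T = "\<lambda>p. W (fst p) (snd p) * (1 + e) powr (- \<alpha> (fst p)) * (1 + e) powr (- \<alpha>' (snd p)) * FF (fst p) (fst w) * GG (snd p) (snd w)"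
  have decomp: "(\<Sum>p\<in>K1. measure M (PMs (1 + e) p w))
     - (\<Sum>p\<in>K1. \<Sum>i\<in>{1..n} - {fst p}. measure M (BXs (e / real n) (1 + e) (1 + e) p i w))
     - (\<Sum>p\<in>K1. \<Sum>l\<in>{1..m} - {snd p}. measure M (BYs (e / real m) (1 + e) (1 + e) p l w))
     = (\<Sum>p\<in>K1. ?T p) + (\<Sum>p\<in>K1. Glow e p w)"
    unfolding Glow_def by (simp add: sum.distrib sum_subtractf)
  have "(1 + e) powr (- Asum) * R w = (\<Sum>p\<in>K1. (1 + e) powr (- Asum) * (W (fst p) (snd p) * FF (fst p) (fst w) * GG (snd p) (snd w)))"
    unfolding R_def by (simp add: sum_distrib_left)
  also have "\<dots> \<le> (\<Sum>p\<in>K1. ?T p)"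
  proof (rule sum_mono)
    fix p assume p: "p \<in> K1"
    have nn: "0 \<le> W (fst p) (snd p) * FF (fst p) (fst w) * GG (snd p) (snd w)"
      using p by (auto intro!: mult_nonneg_nonneg W_nonneg)
    have "(1 + e) powr (- Asum) \<le> (1 + e) powr (- (\<alpha> (fst p) + \<alpha>' (snd p)))"
      by (rule powr_mono) (use alpha_le_A[OF p] e in auto)
    also have "\<dots> = (1 + e) powr (- \<alpha> (fst p)) * (1 + e) powr (- \<alpha>' (snd p))"
      by (simp add: powr_add[symmetric])
    finally have "(1 + e) powr (- Asum) \<le> (1 + e) powr (- \<alpha> (fst p)) * (1 + e) powr (- \<alpha>' (snd p))" .
    hence "(1 + e) powr (- Asum) * (W (fst p) (snd p) * FF (fst p) (fst w) * GG (snd p) (snd w))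
        \<le> ((1 + e) powr (- \<alpha> (fst p)) * (1 + e) powr (- \<alpha>' (snd p))) * (W (fst p) (snd p) * FF (fst p) (fst w) * GG (snd p) (snd w))"
      by (rule mult_right_mono[OF _ nn])
    thus "(1 + e) powr (- Asum) * (W (fst p) (snd p) * FF (fst p) (fst w) * GG (snd p) (snd w)) \<le> ?T p"
      by (simp add: algebra_simps)
  qed
  finally have "(1 + e) powr (- Asum) * R w \<le> (\<Sum>p\<in>K1. ?T p)" .
  with lower[OF e w] decomp show ?thesis by linarith
qed

lemma DD_nonneg: "DD w \<ge> 0" unfolding DD_def by simp

lemma DD_equiv: "DD \<sim>[F2] R"
proof (cases "\<exists>p\<in>K1. W (fst p) (snd p) > 0")
  case True
  then obtain p0 where p0: "p0 \<in> K1" "W (fst p0) (snd p0) > 0" by blast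
  have Rpos: "R w > 0" for w
  proof -
    have "W (fst p0) (snd p0) * FF (fst p0) (fst w) * GG (snd p0) (snd w) > 0"
      using p0 F_pos G_pos by (auto intro!: mult_pos_pos)
    thus ?thesis using R_ge[of "fst p0" "snd p0" w] p0 by auto
  qed
  show ?thesis
  proof (rule asymp_equivI', rule tendstoI)
    fix r :: real assume r: "r > 0"
    have t1: "((\<lambda>t. (1 - t) powr (- Asum)) \<longlongrightarrow> (1 - 0) powr (- Asum)) (at_right 0)"
      by (intro tendsto_intros) auto
    have t2: "((\<lambda>t. (1 + t) powr (- Asum)) \<longlongrightarrow> (1 + 0) powr (- Asum)) (at_right 0)"
      by (intro tendsto_intros) auto
    have ev: "eventually (\<lambda>t. (1 - t) powr (- Asum) < 1 + r / 2 \<and> (1 + t) powr (- Asum) > 1 - r / 2) (at_right (0::real))"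
      using order_tendstoD(2)[OF t1, of "1 + r / 2"] order_tendstoD(1)[OF t2, of "1 - r / 2"] r
      by (auto elim: eventually_elim2)
    then obtain b where b: "b > 0" "\<And>t. t > 0 \<Longrightarrow> t < b \<Longrightarrow> (1 - t) powr (- Asum) < 1 + r / 2 \<and> (1 + t) powr (- Asum) > 1 - r / 2"
      unfolding eventually_at_right_field by auto
    define e where "e = min (b / 2) (1 / 2)"
    have e: "0 < e" "e < 1" "e < b" using b unfolding e_def by auto
    have q: "(1 - e) powr (- Asum) < 1 + r / 2" "(1 + e) powr (- Asum) > 1 - r / 2" using b(2)[OF e(1) e(3)] by auto
    have nu: "((\<lambda>w. (\<Sum>p\<in>K1. Gup e p w) / R w) \<longlongrightarrow> 0) F2"
      by (rule negl_sum) (rule Gup_ok[OF e(1,2)])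
    have nl: "((\<lambda>w. (\<Sum>p\<in>K1. Glow e p w) / R w) \<longlongrightarrow> 0) F2"
      by (rule negl_sum) (rule Glow_ok[OF e(1)])
    have r2: "r / 2 > 0" and r3: "- (r / 2) < 0" using r by simp_all
    show "\<forall>\<^sub>F w in F2. dist (DD w / R w) 1 < r"
      using eventually_F2_pos order_tendstoD(2)[OF nu r2] order_tendstoD(1)[OF nl r3]
    proof eventually_elim
      case (elim w)
      hence w: "0 < fst w \<and> 0 < snd w" and a: "(\<Sum>p\<in>K1. Gup e p w) / R w < r / 2"
        and c: "- (r / 2) < (\<Sum>p\<in>K1. Glow e p w) / R w" by auto
      have Rp: "R w > 0" by (rule Rpos)
      have u: "DD w \<le> (1 - e) powr (- Asum) * R w + (\<Sum>p\<in>K1. Gup e p w)" using upper_R[OF e(1,2)] w by auto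
      have l: "(1 + e) powr (- Asum) * R w + (\<Sum>p\<in>K1. Glow e p w) \<le> DD w" using lower_R[OF e(1)] w by auto
      have u': "DD w / R w \<le> (1 - e) powr (- Asum) + (\<Sum>p\<in>K1. Gup e p w) / R w"
        using u Rp by (simp add: field_simps)
      have l1: "((1 + e) powr (- Asum) * R w + (\<Sum>p\<in>K1. Glow e p w)) / R w \<le> DD w / R w"
        by (rule divide_right_mono[OF l]) (use Rp in simp)
      have l2: "((1 + e) powr (- Asum) * R w + (\<Sum>p\<in>K1. Glow e p w)) / R w = (1 + e) powr (- Asum) + (\<Sum>p\<in>K1. Glow e p w) / R w"
        using Rp by (simp add: add_divide_distrib)
      have l': "(1 + e) powr (- Asum) + (\<Sum>p\<in>K1. Glow e p w) / R w \<le> DD w / R w"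
        using l1 l2 by simp
      show ?case unfolding dist_real_def using u' l' a c q by linarith
    qed
  qed
next
  case False
  hence W0: "\<And>p. p \<in> K1 \<Longrightarrow> W (fst p) (snd p) = 0" using W_nonneg by force
  have R0: "R w = 0" for w unfolding R_def using W0 by (intro sum.neutral) auto
  have "eventually (\<lambda>w. (\<Sum>p\<in>K1. Gup (1/2) p w) = 0) F2"
    by (rule zero_sum) (auto intro: Gup_ok W0)
  hence "eventually (\<lambda>w. DD w = 0) F2"
    using eventually_F2_pos
  proof eventually_elim
    case (elim w)
    hence z: "(\<Sum>p\<in>K1. Gup (1/2) p w) = 0" and w: "0 < fst w \<and> 0 < snd w" by auto
    have "DD w \<le> (1 - 1/2) powr (- Asum) * R w + (\<Sum>p\<in>K1. Gup (1/2) p w)"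
      by (rule upper_R) (use w in auto)
    thus ?case using z R0[of w] DD_nonneg[of w] by simp
  qed
  hence "eventually (\<lambda>w. (if DD w = 0 \<and> R w = 0 then 1 else DD w / R w) = 1) F2"
    by eventually_elim (simp add: R0)
  hence "((\<lambda>w. if DD w = 0 \<and> R w = 0 then 1 else DD w / R w) \<longlongrightarrow> 1) F2"
    by (rule tendsto_eventually)
  thus ?thesis unfolding asymp_equiv_def .
qed

end



context cor_setup begin

lemma R_eq: "R w = (\<Sum>i=1..n. \<Sum>j\<in>{1..m} - {i}.
                       (\<integral>\<omega>. \<Theta> i \<omega> powr \<alpha> i * \<Delta> j \<omega> powr \<alpha>' j \<partial>M)
                       * tail M (X i) (fst w) * tail M (Y j) (snd w))
                 + (\<Sum>i=1..min n m. C i * (\<integral>\<omega>. \<Theta> i \<omega> powr \<alpha> i * \<Delta> i \<omega> powr \<alpha>' i \<partial>M)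
                       * tail M (X i) (fst w) * tail M (Y i) (snd w))"
proof -
  define I where "I i j = (\<integral>\<omega>. \<Theta> i \<omega> powr \<alpha> i * \<Delta> j \<omega> powr \<alpha>' j \<partial>M)" for i j
  have "R w = (\<Sum>i=1..n. \<Sum>j=1..m. W i j * FF i (fst w) * GG j (snd w))"
    unfolding R_def by (simp add: sum.cartesian_product split_def)
  also have "\<dots> = (\<Sum>i=1..n. (\<Sum>j\<in>{1..m} - {i}. I i j * FF i (fst w) * GG j (snd w))
        + (if i \<le> m then C i * I i i * FF i (fst w) * GG i (snd w) else 0))"
  proof (rule sum.cong[OF refl])
    fix i assume i: "i \<in> {1..n}"
    have off: "(\<Sum>j\<in>{1..m} - {i}. W i j * FF i (fst w) * GG j (snd w)) = (\<Sum>j\<in>{1..m} - {i}. I i j * FF i (fst w) * GG j (snd w))"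
      by (rule sum.cong) (auto simp: W_def cc_def I_def)
    show "(\<Sum>j=1..m. W i j * FF i (fst w) * GG j (snd w)) = (\<Sum>j\<in>{1..m} - {i}. I i j * FF i (fst w) * GG j (snd w))
        + (if i \<le> m then C i * I i i * FF i (fst w) * GG i (snd w) else 0)"
    proof (cases "i \<le> m")
      case True
      hence im: "i \<in> {1..m}" using i by auto
      have "(\<Sum>j=1..m. W i j * FF i (fst w) * GG j (snd w)) = W i i * FF i (fst w) * GG i (snd w) + (\<Sum>j\<in>{1..m} - {i}. W i j * FF i (fst w) * GG j (snd w))"
        by (rule sum.remove) (use im in auto)
      thus ?thesis using True off by (simp add: W_def cc_def I_def)
    next
      case False
      hence "{1..m} - {i} = {1..m}" by auto
      thus ?thesis using False off by simp
    qed
  qed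
  also have "\<dots> = (\<Sum>i=1..n. \<Sum>j\<in>{1..m} - {i}. I i j * FF i (fst w) * GG j (snd w))
      + (\<Sum>i=1..n. if i \<le> m then C i * I i i * FF i (fst w) * GG i (snd w) else 0)"
    by (simp add: sum.distrib)
  also have "(\<Sum>i=1..n. if i \<le> m then C i * I i i * FF i (fst w) * GG i (snd w) else 0)
      = (\<Sum>i\<in>{i\<in>{1..n}. i \<le> m}. C i * I i i * FF i (fst w) * GG i (snd w))"
    by (rule sum.inter_filter[symmetric]) simp
  also have "{i\<in>{1..n}. i \<le> m} = {1..min n m}" by auto
  finally show ?thesis unfolding I_def .
qed

end

theorem corollary2p1:
  fixes M :: "'a measure" and n m :: nat
    and X Y \<Theta> \<Delta> :: "nat \<Rightarrow> 'a \<Rightarrow> real"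
    and C \<alpha> \<alpha>' :: "nat \<Rightarrow> real"
  assumes P: "prob_space M"
    and nm: "n \<ge> 1" "m \<ge> 1"
    and meas_X: "\<And>i. i \<in> {1..n} \<Longrightarrow> X i \<in> borel_measurable M"
    and meas_Y: "\<And>j. j \<in> {1..m} \<Longrightarrow> Y j \<in> borel_measurable M"
    and meas_Th: "\<And>i. i \<in> {1..n} \<Longrightarrow> \<Theta> i \<in> borel_measurable M"
    and meas_De: "\<And>j. j \<in> {1..m} \<Longrightarrow> \<Delta> j \<in> borel_measurable M"
    and gtai: "GTAI M n m X Y"
    and Th_nonneg: "\<And>i. i \<in> {1..n} \<Longrightarrow> AE \<omega> in M. \<Theta> i \<omega> \<ge> 0"
    and De_nonneg: "\<And>j. j \<in> {1..m} \<Longrightarrow> AE \<omega> in M. \<Delta> j \<omega> \<ge> 0"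
    and Th_nondeg: "\<And>i. i \<in> {1..n} \<Longrightarrow> measure M {\<omega> \<in> space M. \<Theta> i \<omega> = 0} < 1"
    and De_nondeg: "\<And>j. j \<in> {1..m} \<Longrightarrow> measure M {\<omega> \<in> space M. \<Delta> j \<omega> = 0} < 1"
    and Th_bdd: "\<And>i. i \<in> {1..n} \<Longrightarrow> \<exists>b. AE \<omega> in M. \<Theta> i \<omega> \<le> b"
    and De_bdd: "\<And>j. j \<in> {1..m} \<Longrightarrow> \<exists>b. AE \<omega> in M. \<Delta> j \<omega> \<le> b"
    and indep: "prob_space.indep_var M
                  (PiM (idx n m) (\<lambda>_. borel)) (joint_vec n m \<Theta> \<Delta>)
                  (PiM (idx n m) (\<lambda>_. borel)) (joint_vec n m X Y)"
    and sai: "\<And>i. i \<in> {1..min n m} \<Longrightarrow> SAI M (X i) (Y i) (C i)"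
    and indep_XY: "\<And>i j. i \<in> {1..n} \<Longrightarrow> j \<in> {1..m} \<Longrightarrow> i \<noteq> j \<Longrightarrow>
                     prob_space.indep_var M borel (X i) borel (Y j)"
    and alpha: "\<And>i. i \<in> {1..n} \<Longrightarrow> \<alpha> i \<ge> 0"
    and alpha': "\<And>j. j \<in> {1..m} \<Longrightarrow> \<alpha>' j \<ge> 0"
    and rv_F: "\<And>i. i \<in> {1..n} \<Longrightarrow> regvar_tail (tail M (X i)) (\<alpha> i)"
    and rv_G: "\<And>j. j \<in> {1..m} \<Longrightarrow> regvar_tail (tail M (Y j)) (\<alpha>' j)"
  shows "(\<lambda>(x, y). measure M {\<omega> \<in> space M.
              (\<Sum>i=1..n. \<Theta> i \<omega> * X i \<omega>) > x \<and> (\<Sum>j=1..m. \<Delta> j \<omega> * Y j \<omega>) > y})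
         \<sim>[at_top \<times>\<^sub>F at_top]
         (\<lambda>(x, y). (\<Sum>i=1..n. \<Sum>j\<in>{1..m} - {i}.
                       (\<integral>\<omega>. \<Theta> i \<omega> powr \<alpha> i * \<Delta> j \<omega> powr \<alpha>' j \<partial>M)
                       * tail M (X i) x * tail M (Y j) y)
                 + (\<Sum>i=1..min n m. C i * (\<integral>\<omega>. \<Theta> i \<omega> powr \<alpha> i * \<Delta> i \<omega> powr \<alpha>' i \<partial>M)
                       * tail M (X i) x * tail M (Y i) y))"
proof -
  interpret cor_setup M n m X Y \<Theta> \<Delta> C \<alpha> \<alpha>'
    by (rule cor_setup.intro) (fact assms)+
  have L: "(\<lambda>(x, y). measure M {\<omega> \<in> space M.
              (\<Sum>i=1..n. \<Theta> i \<omega> * X i \<omega>) > x \<and> (\<Sum>j=1..m. \<Delta> j \<omega> * Y j \<omega>) > y}) = DD"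
    by (auto simp: DD_def SS_def TT_def fun_eq_iff)
  have Rr: "(\<lambda>(x, y). (\<Sum>i=1..n. \<Sum>j\<in>{1..m} - {i}.
                       (\<integral>\<omega>. \<Theta> i \<omega> powr \<alpha> i * \<Delta> j \<omega> powr \<alpha>' j \<partial>M)
                       * tail M (X i) x * tail M (Y j) y)
                 + (\<Sum>i=1..min n m. C i * (\<integral>\<omega>. \<Theta> i \<omega> powr \<alpha> i * \<Delta> i \<omega> powr \<alpha>' i \<partial>M)
                       * tail M (X i) x * tail M (Y i) y)) = R"
    by (auto simp: R_eq fun_eq_iff)
  show ?thesis unfolding L Rr by (rule DD_equiv)
qed


end
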